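(* Let $\mathcal{A}\in\mathbb{R}^{m\times n\times p}$, $\mathcal{B}\in\mathbb{R}^{m\times l\times p}$, let $T\subset\mathcal{P}([n])$ be a finite nonempty collection of column blocks, and let $\omega>0$. Let $\mathcal{X}^{(k)}$ be the iterates of the TRBAGS method (defined in the context) with step size $\omega$, started from a fixed initial tensor $\mathcal{X}^{(0)}\in\mathbb{R}^{n\times l\times p}$, where the blocks $\tau_1,\tau_2,\dots$ are sampled independently and uniformly from $T$. Let $\mathcal{X}^\ddagger$ be a minimizer of $\|\mathcal{A}\mathcal{X}-\mathcal{B}\|_F^2$, let $\sigma^2=\max_{\tau\in T}\sigma_{\max}^2(\mathrm{bcirc}(\mathcal{A}_{:\tau:}))$ and $c_{\min}(T)=\min_{i\in[n]}|\{\tau\in T: i\in\tau\}|$. Suppose $2\omega-\omega^2\sigma^2>0$ and set $$\rho=1-(2\omega-\omega^2\sigma^2)\frac{c_{\min}(T)}{|T|}\sigma_{\min}^2(\mathrm{bcirc}(\mathcal{A})).$$ Then for every $k\ge0$, $$\mathbb{E}\big[\|\mathcal{A}\mathcal{X}^{(k)}-\mathcal{A}\mathcal{X}^\ddagger\|_F^2\,\big|\,\mathcal{X}^{(0)}\big]\le\rho^k\,\|\mathcal{A}\mathcal{X}^{(0)}-\mathcal{A}\mathcal{X}^\ddagger\|_F^2.$$ If, in addition, the system $\mathcal{A}\mathcal{X}=\mathcal{A}\mathcal{X}^\ddagger$ has the unique solution $\mathcal{X}=\mathcal{X}^\ddagger$, then for every $k\ge0$, $$\mathbb{E}\big[\|\mathcal{X}^{(k)}-\mathcal{X}^\ddagger\|_F^2\,\big|\,\mathcal{X}^{(0)}\big]\le\kappa^2(\mathcal{A})\,\rho^k\,\|\mathcal{X}^{(0)}-\mathcal{X}^\ddagger\|_F^2,$$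 where $\kappa^2(\mathcal{A}):=\sigma_{\max}^2(\mathrm{bcirc}(\mathcal{A}^\dagger))\,\sigma_{\max}^2(\mathrm{bcirc}(\mathcal{A}))$.
   Context: All tensors are real third-order arrays. For $\mathcal{A}\in\mathbb{R}^{m\times n\times p}$ with frontal slices $\mathcal{A}_1,\dots,\mathcal{A}_p\in\mathbb{R}^{m\times n}$, $\mathrm{bcirc}(\mathcal{A})\in\mathbb{R}^{mp\times np}$ is the block-circulant matrix whose $(i,j)$ block ($i,j\in[p]$) is $\mathcal{A}_{((i-j)\bmod p)+1}$ (so its first block column is $\mathcal{A}_1,\mathcal{A}_2,\dots,\mathcal{A}_p$). For $\mathcal{B}\in\mathbb{R}^{n\times l\times p}$, $\mathrm{unfold}(\mathcal{B})\in\mathbb{R}^{np\times l}$ stacks the frontal slices $\mathcal{B}_1,\dots,\mathcal{B}_p$ vertically, and $\mathrm{fold}$ is its inverse. The t-product is $\mathcal{A}\mathcal{B}=\mathrm{fold}(\mathrm{bcirc}(\mathcal{A})\,\mathrm{unfold}(\mathcal{B}))\in\mathbb{R}^{m\times l\times p}$. The transpose $\mathcal{A}^*\in\mathbb{R}^{n\times m\times p}$ is obtained by transposing each frontal slice and reversing the order of the transposed slices $2$ through $p$ (so $\mathrm{bcirc}(\mathcal{A}^* )=\mathrm{bcirc}(\mathcal{A})^\top$). The pseudoinverse $\mathcal{A}^\dagger$ is the tensor with $\mathrm{bcirc}(\mathcal{A}^\dagger)=\mathrm{bcirc}(\mathcal{A})^\dagger$ (Moore–Penrose pseudoinverse). $\|\cdot\|_F$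 is the Frobenius norm (square root of the sum of squares of all entries). $\sigma_{\min}(\mathbf{M}),\sigma_{\max}(\mathbf{M})$ are the smallest and largest singular values of a matrix $\mathbf{M}$. For $\tau\subset[n]$, $\mathcal{A}_{:\tau:}\in\mathbb{R}^{m\times|\tau|\times p}$ consists of the lateral slices (columns) of $\mathcal{A}$ indexed by $\tau$, and $\mathcal{E}_\tau\in\mathbb{R}^{n\times|\tau|\times p}$ is the tensor whose first frontal slice consists of the columns of $I_n$ indexed by $\tau$ and whose other frontal slices are zero (so $\mathcal{A}\mathcal{E}_\tau=\mathcal{A}_{:\tau:}$). $\mathcal{P}([n])$ is the power set of $[n]=\{1,\dots,n\}$. TRBAGS method with step size $\omega$: given $\mathcal{X}^{(0)}$, for $k=1,2,\dots$ sample $\tau_k$ and set $\mathcal{X}^{(k)}=\mathcal{X}^{(k-1)}-\omega\,\mathcal{E}_{\tau_k}\mathcal{A}_{:\tau_k:}^*(\mathcal{A}\mathcal{X}^{(k-1)}-\mathcal{B})$. *)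

theory Defs
  imports "Jordan_Normal_Form.Char_Poly"
begin

text \<open>Representation: a third-order tensor of size a x b x p is represented by its
  unfolding, i.e. a real matrix of size (a*p) x b whose row block number k (rows k*a .. k*a+a-1)
  is the frontal slice k+1.  All indices are 0-based; [n] is represented by {..<n}.\<close>

definition bcirc :: "nat \<Rightarrow> real mat \<Rightarrow> real mat" where
  "bcirc p A = (let a = dim_row A div p; b = dim_col A in
     mat (a * p) (b * p)
       (\<lambda>(r, c). A $$ (((r div a + p - c div b) mod p) * a + r mod a, c mod b)))"

text \<open>t-product: fold (bcirc A * unfold B); with the unfolded representation fold/unfold are identities.\<close>
definition tprod :: "nat \<Rightarrow> real mat \<Rightarrow> real mat \<Rightarrow> real mat" where
  "tprod p A B = bcirc p A * B"

text \<open>Tensor transpose: transpose each frontal slice and reverse slices 2..p.\<close>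
definition ttrans :: "nat \<Rightarrow> real mat \<Rightarrow> real mat" where
  "ttrans p A = (let a = dim_row A div p; b = dim_col A in
     mat (b * p) a (\<lambda>(r, c). A $$ (((p - r div b) mod p) * a + c, r mod b)))"

text \<open>E_tau (n x |tau| x p): first slice = columns of I_n indexed by tau (in increasing order), other slices zero.\<close>
definition Etau :: "nat \<Rightarrow> nat \<Rightarrow> nat set \<Rightarrow> real mat" where
  "Etau n p \<tau> = mat (n * p) (card \<tau>)
     (\<lambda>(r, c). if r = sorted_list_of_set \<tau> ! c then 1 else 0)"

definition lat_slices :: "nat \<Rightarrow> nat \<Rightarrow> real mat \<Rightarrow> nat set \<Rightarrow> real mat" where
  "lat_slices n p A \<tau> = tprod p A (Etau n p \<tau>)"

definition fro_norm :: "real mat \<Rightarrow> real" where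
  "fro_norm M = sqrt (\<Sum>i<dim_row M. \<Sum>j<dim_col M. (M $$ (i, j))\<^sup>2)"

text \<open>Singular values of M: square roots of the eigenvalues of M^T M (if #cols <= #rows)
  resp. of M M^T (otherwise); there are min(#rows,#cols) of them.\<close>
definition gram :: "real mat \<Rightarrow> real mat" where
  "gram M = (if dim_col M \<le> dim_row M then transpose_mat M * M else M * transpose_mat M)"

definition sigma_max :: "real mat \<Rightarrow> real" where
  "sigma_max M = (if dim_row M = 0 \<or> dim_col M = 0 then 0
                  else sqrt (Max {ev. eigenvalue (gram M) ev}))"

definition sigma_min :: "real mat \<Rightarrow> real" where
  "sigma_min M = (if dim_row M = 0 \<or> dim_col M = 0 then 0
                  else sqrt (Min {ev. eigenvalue (gram M) ev}))"

definition pinv :: "real mat \<Rightarrow> real mat" where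
  "pinv M = (THE X. X \<in> carrier_mat (dim_col M) (dim_row M) \<and>
       M * X * M = M \<and> X * M * X = X \<and>
       transpose_mat (M * X) = M * X \<and> transpose_mat (X * M) = X * M)"

definition trbags_step :: "nat \<Rightarrow> nat \<Rightarrow> real mat \<Rightarrow> real mat \<Rightarrow> real \<Rightarrow> real mat \<Rightarrow> nat set \<Rightarrow> real mat" where
  "trbags_step n p A B \<omega> X \<tau> =
     X - \<omega> \<cdot>\<^sub>m tprod p (Etau n p \<tau>)
                   (tprod p (ttrans p (lat_slices n p A \<tau>)) (tprod p A X - B))"

definition trbags_iter :: "nat \<Rightarrow> nat \<Rightarrow> real mat \<Rightarrow> real mat \<Rightarrow> real \<Rightarrow> real mat \<Rightarrow> nat set list \<Rightarrow> real mat" where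
  "trbags_iter n p A B \<omega> X0 \<tau>s = foldl (trbags_step n p A B \<omega>) X0 \<tau>s"

text \<open>Expectation of f over tau_1..tau_k drawn i.i.d. uniformly from the finite set T.\<close>
definition expect_blocks :: "nat set set \<Rightarrow> nat \<Rightarrow> (nat set list \<Rightarrow> real) \<Rightarrow> real" where
  "expect_blocks T k f =
     (\<Sum>\<tau>s\<in>{\<tau>s. set \<tau>s \<subseteq> T \<and> length \<tau>s = k}. f \<tau>s) / real (card T) ^ k"

definition c_min :: "nat \<Rightarrow> nat set set \<Rightarrow> nat" where
  "c_min n T = Min ((\<lambda>i. card {\<tau>\<in>T. i \<in> \<tau>}) ` {..<n})"

end

theory Submission
  imports Defs "HOL-Analysis.Function_Topology"
begin

lemma perturb_zero:
  fixes b c :: real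
  assumes "\<And>t. 2*t*b + t^2*c \<le> 0"
  shows "b = 0"
proof (rule ccontr)
  assume b: "b \<noteq> 0"
  define d where "d = \<bar>c\<bar> + 1"
  have d: "d > 0" "\<bar>c\<bar> < d" unfolding d_def by auto
  define t where "t = b / d"
  have "2*t*b + t^2*c \<le> 0" by (rule assms)
  hence "d^2 * (2*t*b + t^2*c) \<le> 0" using d by (simp add: mult_nonpos_nonneg mult_nonneg_nonpos)
  moreover have "d^2 * (2*t*b + t^2*c) = b^2 * (2*d + c)" using d unfolding t_def
    by (simp add: field_simps power2_eq_square)
  moreover have "b^2 * (2*d + c) > 0" using b d by (intro mult_pos_pos) auto
  ultimately show False by linarith
qed

definition sph :: "nat \<Rightarrow> (nat \<Rightarrow> real) set" where
  "sph N = {x. (\<forall>i\<ge>N. x i = 0) \<and> (\<Sum>i<N. (x i)^2) = 1}"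

lemma compact_sph: "compact (sph N)"
proof -
  let ?K = "PiE UNIV (\<lambda>i::nat. if i < N then {-1..1::real} else {0})"
  have "compactin (product_topology (\<lambda>_. euclideanreal) UNIV) ?K"
    unfolding compactin_PiE by auto
  then have K: "compact ?K" by (simp add: euclidean_product_topology)
  have c1: "closed {x::nat\<Rightarrow>real. (\<Sum>i<N. (x i)^2) = 1}"
    by (rule closed_Collect_eq) (auto intro!: continuous_intros continuous_on_product_coordinates)
  have c2: "closed (\<Inter>i\<in>{N..}. {x::nat\<Rightarrow>real. x i = 0})"
    by (intro closed_INT ballI closed_Collect_eq) (auto intro!: continuous_intros continuous_on_product_coordinates)
  have eq: "sph N = {x::nat\<Rightarrow>real. (\<Sum>i<N. (x i)^2) = 1} \<inter> (\<Inter>i\<in>{N..}. {x::nat\<Rightarrow>real. x i = 0})"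
    unfolding sph_def by auto
  have sub: "sph N \<subseteq> ?K"
  proof
    fix x assume x: "x \<in> sph N"
    have "\<bar>x i\<bar> \<le> 1" if "i < N" for i
    proof -
      have "(x i)^2 \<le> (\<Sum>i<N. (x i)^2)" using that by (intro member_le_sum) auto
      then have "(x i)^2 \<le> 1" using x unfolding sph_def by auto
      then show ?thesis by (simp add: abs_square_le_1)
    qed
    then show "x \<in> ?K" using x unfolding sph_def by (auto simp: abs_le_iff)
  qed
  have "compact (sph N \<inter> ?K)" unfolding eq by (intro closed_Int_compact closed_Int c1 c2 K)
  moreover have "sph N \<inter> ?K = sph N" using sub by auto
  ultimately show ?thesis by simp
qed

definition qf :: "nat \<Rightarrow> (nat \<Rightarrow> nat \<Rightarrow> real) \<Rightarrow> (nat \<Rightarrow> real) \<Rightarrow> real" where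
  "qf N G x = (\<Sum>i<N. \<Sum>j<N. G i j * x i * x j)"

lemma qf_cont: "continuous_on UNIV (qf N G)"
  unfolding qf_def by (auto intro!: continuous_intros continuous_on_product_coordinates)

lemma sph_ne: assumes N: "N > 0" shows "(\<lambda>i. if i = 0 then 1 else 0) \<in> sph N"
proof -
  have "(\<Sum>i<N. ((\<lambda>i. if i = 0 then 1 else 0) i :: real)^2) = (\<Sum>i<N. if i = 0 then 1 else 0)"
    by (intro sum.cong) auto
  also have "\<dots> = 1" using N by (simp add: sum.delta)
  finally show ?thesis unfolding sph_def using N by auto
qed

lemma qf_scale: "qf N G (\<lambda>i. c * x i) = c^2 * qf N G x"
  unfolding qf_def by (simp add: sum_distrib_left power2_eq_square algebra_simps)

lemma qf_add: 
  assumes sym: "\<And>i j. G i j = G j i"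
  shows "qf N G (\<lambda>i. x i + t * y i) = qf N G x + 2 * t * (\<Sum>i<N. (\<Sum>j<N. G i j * x j) * y i) + t^2 * qf N G y"
proof -
  have s: "(\<Sum>i<N. \<Sum>j<N. G i j * y i * x j) = (\<Sum>i<N. \<Sum>j<N. G i j * x i * y j)"
    by (subst sum.swap) (simp add: sym mult.commute mult.left_commute)
  have "qf N G (\<lambda>i. x i + t * y i) = qf N G x + t * (\<Sum>i<N. \<Sum>j<N. G i j * x i * y j)
     + t * (\<Sum>i<N. \<Sum>j<N. G i j * y i * x j) + t^2 * qf N G y"
    unfolding qf_def by (simp add: algebra_simps sum.distrib sum_distrib_left power2_eq_square)
  also have "\<dots> = qf N G x + 2 * t * (\<Sum>i<N. \<Sum>j<N. G i j * y i * x j) + t^2 * qf N G y"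
    using s by simp
  also have "(\<Sum>i<N. \<Sum>j<N. G i j * y i * x j) = (\<Sum>i<N. (\<Sum>j<N. G i j * x j) * y i)"
    by (simp add: sum_distrib_left sum_distrib_right mult.commute mult.left_commute)
  finally show ?thesis .
qed

lemma rayleigh_fun:
  fixes G :: "nat \<Rightarrow> nat \<Rightarrow> real"
  assumes N: "N > 0" and sym: "\<And>i j. G i j = G j i"
  shows "\<exists>x lam. (\<forall>i\<ge>N. x i = 0) \<and> (\<Sum>i<N. (x i)^2) = 1 \<and>
     (\<forall>k<N. (\<Sum>j<N. G k j * x j) = lam * x k) \<and>
     (\<forall>y. (\<forall>i\<ge>N. y i = 0) \<longrightarrow> qf N G y \<le> lam * (\<Sum>i<N. (y i)^2))"
proof -
  obtain x where x: "x \<in> sph N" and xmax: "\<forall>y\<in>sph N. qf N G y \<le> qf N G x"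
    using continuous_attains_sup[OF compact_sph _ continuous_on_subset[OF qf_cont]] sph_ne[OF N]
    by blast
  define lam where "lam = qf N G x"
  have bound: "qf N G y \<le> lam * (\<Sum>i<N. (y i)^2)" if y: "\<forall>i\<ge>N. y i = 0" for y
  proof (cases "(\<Sum>i<N. (y i)^2) = 0")
    case True
    then have "\<forall>i<N. y i = 0" by (simp add: sum_nonneg_eq_0_iff)
    then have "qf N G y = 0" unfolding qf_def by simp
    then show ?thesis using True by simp
  next
    case False
    define s where "s = (\<Sum>i<N. (y i)^2)"
    have s: "s > 0" using False unfolding s_def by (simp add: less_le sum_nonneg)
    define z where "z = (\<lambda>i. (1 / sqrt s) * y i)"
    have "(\<Sum>i<N. (z i)^2) = (1/sqrt s)^2 * s" unfolding z_def s_def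
      by (simp only: power_mult_distrib sum_distrib_left)
    also have "\<dots> = 1" using s by (simp add: power_divide)
    finally have "z \<in> sph N" using y unfolding sph_def z_def by auto
    then have "qf N G z \<le> lam" using xmax lam_def by auto
    moreover have "qf N G z = qf N G y / s" unfolding z_def qf_scale using s
      by (simp add: power_divide)
    ultimately show ?thesis using s unfolding s_def by (simp add: divide_le_eq mult.commute)
  qed
  have eig: "(\<Sum>j<N. G k j * x j) = lam * x k" if k: "k < N" for k
  proof -
    define y where "y = (\<lambda>i. if i = k then (1::real) else 0)"
    have ys: "\<forall>i\<ge>N. y i = 0" using k unfolding y_def by auto
    have xs: "\<forall>i\<ge>N. x i = 0" and x1: "(\<Sum>i<N. (x i)^2) = 1" using x unfolding sph_def by auto
    let ?b = "(\<Sum>i<N. (\<Sum>j<N. G i j * x j) * y i) - lam * (\<Sum>i<N. x i * y i)"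
    let ?c = "qf N G y - lam * (\<Sum>i<N. (y i)^2)"
    have "2*t*?b + t^2*?c \<le> 0" for t
    proof -
      have "qf N G (\<lambda>i. x i + t * y i) \<le> lam * (\<Sum>i<N. (x i + t * y i)^2)"
        using bound[of "\<lambda>i. x i + t * y i"] xs ys by auto
      also have "(\<Sum>i<N. (x i + t * y i)^2) = (\<Sum>i<N. (x i)^2) + 2 * t * (\<Sum>i<N. x i * y i) + t^2 * (\<Sum>i<N. (y i)^2)"
        by (simp add: power2_eq_square algebra_simps sum.distrib sum_distrib_left)
      finally show ?thesis unfolding qf_add[OF sym] using x1 lam_def by (simp add: algebra_simps)
    qed
    then have "?b = 0" by (rule perturb_zero)
    then show ?thesis using k unfolding y_def by (simp add: if_distrib sum.delta cong: if_cong)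
  qed
  show ?thesis using x eig bound unfolding sph_def by blast
qed

lemma rayleigh_gen:
  fixes G :: "real mat" and c :: real
  assumes G: "G \<in> carrier_mat N N" and N: "N > 0" and sym: "transpose_mat G = G"
    and c: "c = 1 \<or> c = -1"
  shows "\<exists>lam. eigenvalue G lam \<and> (\<forall>v\<in>carrier_vec N. c * (v \<bullet> (G *\<^sub>v v)) \<le> c * lam * (v \<bullet> v))"
proof -
  define Gf where "Gf = (\<lambda>i j. c * (if i < N \<and> j < N then G $$ (i, j) else 0))"
  have symf: "Gf i j = Gf j i" for i j
  proof -
    have "G $$ (i, j) = G $$ (j, i)" if "i < N" "j < N"
      using arg_cong[OF sym, of "\<lambda>A. A $$ (j, i)"] that G by auto
    then show ?thesis unfolding Gf_def by auto
  qed
  obtain x lam where xs: "\<forall>i\<ge>N. x i = 0" and x1: "(\<Sum>i<N. (x i)^2) = 1"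
    and eig: "\<forall>k<N. (\<Sum>j<N. Gf k j * x j) = lam * x k"
    and bnd: "\<forall>y. (\<forall>i\<ge>N. y i = 0) \<longrightarrow> qf N Gf y \<le> lam * (\<Sum>i<N. (y i)^2)"
    using rayleigh_fun[of N Gf, OF N symf] by (elim exE conjE) (rule that; assumption)
  have cc: "c * c = 1" using c by auto
  define w where "w = vec N x"
  have w: "w \<in> carrier_vec N" unfolding w_def by auto
  have w0: "w \<noteq> 0\<^sub>v N"
  proof
    assume "w = 0\<^sub>v N"
    then have "\<forall>i<N. x i = 0" unfolding w_def by (metis index_vec index_zero_vec(1))
    then show False using x1 by simp
  qed
  have Gw: "G *\<^sub>v w = (c * lam) \<cdot>\<^sub>v w"
  proof (rule eq_vecI)
    fix k assume "k < dim_vec ((c * lam) \<cdot>\<^sub>v w)"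
    then have k: "k < N" using w by simp
    have "(G *\<^sub>v w) $ k = (\<Sum>j<N. G $$ (k, j) * x j)"
      using G k unfolding w_def by (simp add: scalar_prod_def lessThan_atLeast0)
    also have "\<dots> = c * (\<Sum>j<N. Gf k j * x j)"
      unfolding Gf_def using k cc by (simp add: sum_distrib_left mult.assoc[symmetric])
    also have "\<dots> = c * lam * x k" using eig k by simp
    finally show "(G *\<^sub>v w) $ k = ((c * lam) \<cdot>\<^sub>v w) $ k" using k w unfolding w_def by simp
  qed (use G w in auto)
  have ev: "eigenvalue G (c * lam)" unfolding eigenvalue_def eigenvector_def
    using w w0 Gw G by auto
  have "c * (v \<bullet> (G *\<^sub>v v)) \<le> c * (c * lam) * (v \<bullet> v)" if v: "v \<in> carrier_vec N" for v
  proof -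
    define y where "y = (\<lambda>i. if i < N then v $ i else 0)"
    have "\<forall>i\<ge>N. y i = 0" unfolding y_def by auto
    then have b: "qf N Gf y \<le> lam * (\<Sum>i<N. (y i)^2)" using bnd by auto
    have q1: "qf N Gf y = c * (\<Sum>i<N. \<Sum>j<N. G $$ (i,j) * v $ i * v $ j)"
      unfolding qf_def Gf_def y_def by (simp add: sum_distrib_left mult.assoc)
    have q2: "v \<bullet> (G *\<^sub>v v) = (\<Sum>i<N. \<Sum>j<N. G $$ (i,j) * v $ i * v $ j)"
      using v G by (simp add: scalar_prod_def lessThan_atLeast0 sum_distrib_left mult.commute mult.left_commute)
    have "qf N Gf y = c * (v \<bullet> (G *\<^sub>v v))" using q1 q2 by simp
    moreover have "(\<Sum>i<N. (y i)^2) = v \<bullet> v" unfolding y_def using v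
      by (simp add: scalar_prod_def lessThan_atLeast0 power2_eq_square)
    ultimately show ?thesis using b cc by (simp add: mult.assoc[symmetric])
  qed
  then show ?thesis using ev by blast
qed

lemma ev_finite: assumes G: "(G :: real mat) \<in> carrier_mat N N"
  shows "finite {ev. eigenvalue G ev}"
proof -
  have "char_poly G \<noteq> 0" using degree_monic_char_poly[OF G] by (metis coeff_0 zero_neq_one)
  then have "finite {ev. poly (char_poly G) ev = 0}" by (rule poly_roots_finite)
  then show ?thesis using eigenvalue_root_char_poly[OF G] by simp
qed

lemma rayleigh_max:
  assumes G: "(G :: real mat) \<in> carrier_mat N N" and N: "N > 0" and sym: "transpose_mat G = G"
    and v: "v \<in> carrier_vec N"
  shows "v \<bullet> (G *\<^sub>v v) \<le> Max {ev. eigenvalue G ev} * (v \<bullet> v)"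
proof -
  obtain lam where ev: "eigenvalue G lam" and b: "\<forall>v\<in>carrier_vec N. 1 * (v \<bullet> (G *\<^sub>v v)) \<le> 1 * lam * (v \<bullet> v)"
    using rayleigh_gen[OF G N sym, of 1] by auto
  have "lam \<le> Max {ev. eigenvalue G ev}" using ev ev_finite[OF G] by auto
  moreover have "v \<bullet> v \<ge> 0" using v by (auto simp: scalar_prod_def intro!: sum_nonneg)
  ultimately have "lam * (v \<bullet> v) \<le> Max {ev. eigenvalue G ev} * (v \<bullet> v)" by (rule mult_right_mono)
  moreover have "1 * (v \<bullet> (G *\<^sub>v v)) \<le> 1 * lam * (v \<bullet> v)" using b v by blast
  ultimately show ?thesis by simp
qed

lemma rayleigh_min:
  assumes G: "(G :: real mat) \<in> carrier_mat N N" and N: "N > 0" and sym: "transpose_mat G = G"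
    and v: "v \<in> carrier_vec N"
  shows "v \<bullet> (G *\<^sub>v v) \<ge> Min {ev. eigenvalue G ev} * (v \<bullet> v)"
proof -
  obtain lam where ev: "eigenvalue G lam" and b: "\<forall>v\<in>carrier_vec N. -1 * (v \<bullet> (G *\<^sub>v v)) \<le> -1 * lam * (v \<bullet> v)"
    using rayleigh_gen[OF G N sym, of "-1"] by auto
  have "lam \<ge> Min {ev. eigenvalue G ev}" using ev ev_finite[OF G] by auto
  moreover have "v \<bullet> v \<ge> 0" using v by (auto simp: scalar_prod_def intro!: sum_nonneg)
  ultimately have "Min {ev. eigenvalue G ev} * (v \<bullet> v) \<le> lam * (v \<bullet> v)" by (rule mult_right_mono)
  moreover have "-1 * (v \<bullet> (G *\<^sub>v v)) \<le> -1 * lam * (v \<bullet> v)" using b v by blast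
  ultimately show ?thesis by simp
qed

lemma eig_nonneg:
  assumes G: "(G :: real mat) \<in> carrier_mat N N" and N: "N > 0" and sym: "transpose_mat G = G"
    and psd: "\<forall>v\<in>carrier_vec N. v \<bullet> (G *\<^sub>v v) \<ge> 0"
  shows "Min {ev. eigenvalue G ev} \<ge> 0" "Max {ev. eigenvalue G ev} \<ge> 0"
proof -
  have all: "lam \<ge> 0" if "eigenvalue G lam" for lam
  proof -
    obtain w where w: "w \<in> carrier_vec N" "w \<noteq> 0\<^sub>v N" "G *\<^sub>v w = lam \<cdot>\<^sub>v w"
      using \<open>eigenvalue G lam\<close> G unfolding eigenvalue_def eigenvector_def by auto
    have "w \<bullet> w > 0"
    proof -
      obtain i where i: "i < N" "w $ i \<noteq> 0"
      proof (rule ccontr)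
        assume nt: "\<not> thesis"
        have "\<forall>i<N. w $ i = 0" using that nt by blast
        then have "w = 0\<^sub>v N" using w(1) by (intro eq_vecI) auto
        then show False using w(2) by simp
      qed
      have "(w $ i)^2 \<le> (\<Sum>j\<in>{0..<N}. w $ j * w $ j)"
        using i unfolding power2_eq_square by (intro member_le_sum) auto
      moreover have "(w $ i)^2 > 0" using i by simp
      ultimately have "0 < (\<Sum>j\<in>{0..<N}. w $ j * w $ j)" by linarith
      then show ?thesis using w by (simp add: scalar_prod_def)
    qed
    moreover have "w \<bullet> (G *\<^sub>v w) = lam * (w \<bullet> w)" using w by simp
    ultimately show ?thesis using psd w(1) by (smt (verit) mult_neg_pos)
  qed
  obtain lam where ev: "eigenvalue G lam"
    using rayleigh_gen[OF G N sym, of 1] by auto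
  have fin: "finite {ev. eigenvalue G ev}" by (rule ev_finite[OF G])
  show "Min {ev. eigenvalue G ev} \<ge> 0" using all fin ev
    by (metis (mono_tags, lifting) Min_in empty_iff mem_Collect_eq)
  show "Max {ev. eigenvalue G ev} \<ge> 0" using all fin ev
    by (metis (mono_tags, lifting) Max_in empty_iff mem_Collect_eq)
qed

definition minner :: "real mat \<Rightarrow> real mat \<Rightarrow> real" where
  "minner X Y = (\<Sum>i<dim_row X. \<Sum>j<dim_col X. X $$ (i, j) * Y $$ (i, j))"

abbreviation fro2 :: "real mat \<Rightarrow> real" where "fro2 X \<equiv> minner X X"

lemma fro2_nonneg: "fro2 X \<ge> 0"
  unfolding minner_def by (auto intro!: sum_nonneg)

lemma fro_norm_sq: "(fro_norm X)^2 = fro2 X"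
proof -
  have "(\<Sum>i<dim_row X. \<Sum>j<dim_col X. (X $$ (i, j))\<^sup>2) = fro2 X"
    unfolding minner_def by (simp add: power2_eq_square)
  then show ?thesis unfolding fro_norm_def using fro2_nonneg[of X] by simp
qed

lemma fro2_zero: assumes X: "X \<in> carrier_mat a b" and z: "fro2 X = 0"
  shows "X = 0\<^sub>m a b"
proof (rule eq_matI)
  fix i j assume i: "i < dim_row (0\<^sub>m a b)" and j: "j < dim_col (0\<^sub>m a b)"
  then have i: "i < a" and j: "j < b" by auto
  have "X $$ (i, j) * X $$ (i, j) \<le> (\<Sum>j<b. X $$ (i, j) * X $$ (i, j))"
    using j by (intro member_le_sum) auto
  also have "\<dots> \<le> (\<Sum>i<a. \<Sum>j<b. X $$ (i, j) * X $$ (i, j))"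
    using i by (intro member_le_sum[of i "{..<a}" "\<lambda>i. \<Sum>j<b. X $$ (i, j) * X $$ (i, j)"]) (auto intro!: sum_nonneg)
  also have "\<dots> = 0" using z X unfolding minner_def by simp
  finally have "X $$ (i, j) * X $$ (i, j) \<le> 0" .
  then have "X $$ (i, j) * X $$ (i, j) = 0" using zero_le_square[of "X $$ (i, j)"] by linarith
  then have "X $$ (i, j) = 0" by simp
  then show "X $$ (i, j) = 0\<^sub>m a b $$ (i, j)" using i j by auto
qed (use X in auto)

lemma minner_comm: assumes "X \<in> carrier_mat a b" "Y \<in> carrier_mat a b"
  shows "minner X Y = minner Y X"
  using assms unfolding minner_def by (simp add: mult.commute)

lemma minner_cols: assumes X: "X \<in> carrier_mat a b" and Y: "Y \<in> carrier_mat a b"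
  shows "minner X Y = (\<Sum>j<b. col X j \<bullet> col Y j)"
  using X Y unfolding minner_def scalar_prod_def
  by (simp add: lessThan_atLeast0) (rule sum.swap)

lemma minner_adj:
  assumes X: "X \<in> carrier_mat a l" and N: "N \<in> carrier_mat a b" and Y: "Y \<in> carrier_mat b l"
  shows "minner X (N * Y) = minner (transpose_mat N * X) Y"
proof -
  have L: "minner X (N * Y) = (\<Sum>i<a. \<Sum>j<l. \<Sum>k<b. X $$ (i, j) * N $$ (i, k) * Y $$ (k, j))"
    using X N Y unfolding minner_def
    by (simp add: scalar_prod_def sum_distrib_left lessThan_atLeast0 mult.assoc)
  have R: "minner (transpose_mat N * X) Y = (\<Sum>k<b. \<Sum>j<l. \<Sum>i<a. X $$ (i, j) * N $$ (i, k) * Y $$ (k, j))"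
    using X N Y unfolding minner_def
    by (simp add: scalar_prod_def sum_distrib_right sum_distrib_left lessThan_atLeast0 mult_ac)
  have "(\<Sum>i<a. \<Sum>j<l. \<Sum>k<b. X $$ (i, j) * N $$ (i, k) * Y $$ (k, j))
      = (\<Sum>i<a. \<Sum>k<b. \<Sum>j<l. X $$ (i, j) * N $$ (i, k) * Y $$ (k, j))"
    by (intro sum.cong refl sum.swap)
  also have "\<dots> = (\<Sum>k<b. \<Sum>i<a. \<Sum>j<l. X $$ (i, j) * N $$ (i, k) * Y $$ (k, j))"
    by (rule sum.swap)
  also have "\<dots> = (\<Sum>k<b. \<Sum>j<l. \<Sum>i<a. X $$ (i, j) * N $$ (i, k) * Y $$ (k, j))"
    by (intro sum.cong refl sum.swap)
  finally show ?thesis using L R by simp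
qed

lemma fro2_lin: assumes X: "X \<in> carrier_mat a b" and Y: "Y \<in> carrier_mat a b"
  shows "fro2 (X + c \<cdot>\<^sub>m Y) = fro2 X + 2 * c * minner X Y + c^2 * fro2 Y"
  using X Y unfolding minner_def
  by (simp add: sum.distrib sum_distrib_left algebra_simps power2_eq_square)

lemma fro2_minus: assumes X: "X \<in> carrier_mat a b" and Y: "Y \<in> carrier_mat a b"
  shows "fro2 (X - c \<cdot>\<^sub>m Y) = fro2 X - 2 * c * minner X Y + c^2 * fro2 Y"
proof -
  have "X - c \<cdot>\<^sub>m Y = X + (-c) \<cdot>\<^sub>m Y" using X Y by (intro eq_matI) auto
  then show ?thesis using fro2_lin[OF X Y, of "-c"] by simp
qed

lemma cauchy_schwarz: assumes X: "X \<in> carrier_mat a b" and Y: "Y \<in> carrier_mat a b"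
  shows "(minner X Y)^2 \<le> fro2 X * fro2 Y"
proof (cases "fro2 Y = 0")
  case True
  then have "Y = 0\<^sub>m a b" using fro2_zero[OF Y] by simp
  then have "minner X Y = 0" using X unfolding minner_def by simp
  then show ?thesis using True by simp
next
  case False
  then have pos: "fro2 Y > 0" using fro2_nonneg[of Y] by simp
  define t where "t = minner X Y / fro2 Y"
  have "0 \<le> fro2 (X - t \<cdot>\<^sub>m Y)" by (rule fro2_nonneg)
  also have "\<dots> = fro2 X - 2 * t * minner X Y + t^2 * fro2 Y" by (rule fro2_minus[OF X Y])
  also have "\<dots> = fro2 X - (minner X Y)^2 / fro2 Y" using pos unfolding t_def
    by (simp add: field_simps power2_eq_square)
  finally show ?thesis using pos by (simp add: field_simps)
qed

lemma vec_adj: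
  fixes M :: "real mat"
  assumes M: "M \<in> carrier_mat a b" and v: "v \<in> carrier_vec b" and u: "u \<in> carrier_vec a"
  shows "v \<bullet> (transpose_mat M *\<^sub>v u) = (M *\<^sub>v v) \<bullet> u"
proof -
  have "v \<bullet> (transpose_mat M *\<^sub>v u) = (\<Sum>k<b. \<Sum>i<a. v $ k * M $$ (i, k) * u $ i)"
    using M v u by (simp add: scalar_prod_def lessThan_atLeast0 sum_distrib_left mult.assoc)
  also have "\<dots> = (\<Sum>i<a. \<Sum>k<b. v $ k * M $$ (i, k) * u $ i)" by (rule sum.swap)
  also have "\<dots> = (M *\<^sub>v v) \<bullet> u"
    using M v u by (simp add: scalar_prod_def lessThan_atLeast0 sum_distrib_right sum_distrib_left mult_ac)
  finally show ?thesis .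
qed

lemma sp_self_nonneg: "(w :: real vec) \<bullet> w \<ge> 0"
  unfolding scalar_prod_def by (simp add: sum_nonneg)

lemma gram_psd:
  fixes M :: "real mat"
  assumes M: "M \<in> carrier_mat a b" and v: "v \<in> carrier_vec b"
  shows "v \<bullet> ((transpose_mat M * M) *\<^sub>v v) \<ge> 0"
proof -
  have "(transpose_mat M * M) *\<^sub>v v = transpose_mat M *\<^sub>v (M *\<^sub>v v)"
    using M v by (simp add: assoc_mult_mat_vec)
  then have "v \<bullet> ((transpose_mat M * M) *\<^sub>v v) = (M *\<^sub>v v) \<bullet> (M *\<^sub>v v)"
    using vec_adj[OF M v, of "M *\<^sub>v v"] M v by simp
  moreover have "(M *\<^sub>v v) \<bullet> (M *\<^sub>v v) \<ge> 0" by (rule sp_self_nonneg)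
  ultimately show ?thesis by simp
qed

lemma mat_rayleigh:
  assumes G: "(G :: real mat) \<in> carrier_mat N N" and N: "N > 0" and sym: "transpose_mat G = G"
    and X: "X \<in> carrier_mat N l"
  shows "minner X (G * X) \<le> Max {ev. eigenvalue G ev} * fro2 X"
    "minner X (G * X) \<ge> Min {ev. eigenvalue G ev} * fro2 X"
proof -
  have GX: "G * X \<in> carrier_mat N l" using G X by auto
  have e1: "minner X (G * X) = (\<Sum>j<l. col X j \<bullet> (G *\<^sub>v col X j))"
    unfolding minner_cols[OF X GX]
  proof (rule sum.cong[OF refl])
    fix j assume "j \<in> {..<l}"
    then have "col (G * X) j = G *\<^sub>v col X j" by (intro col_mult2[OF G X]) simp
    then show "col X j \<bullet> col (G * X) j = col X j \<bullet> (G *\<^sub>v col X j)" by (simp only:)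
  qed
  have e2: "fro2 X = (\<Sum>j<l. col X j \<bullet> col X j)" using minner_cols[OF X X] .
  show "minner X (G * X) \<le> Max {ev. eigenvalue G ev} * fro2 X"
    unfolding e1 e2 sum_distrib_left
    by (rule sum_mono, rule rayleigh_max[OF G N sym]) (use X in auto)
  show "minner X (G * X) \<ge> Min {ev. eigenvalue G ev} * fro2 X"
    unfolding e1 e2 sum_distrib_left
    by (rule sum_mono, rule rayleigh_min[OF G N sym]) (use X in auto)
qed

lemma gram_props:
  fixes M :: "real mat"
  assumes M: "M \<in> carrier_mat a b" and a: "a > 0" and b: "b > 0"
  shows "\<exists>N. gram M \<in> carrier_mat N N \<and> N > 0 \<and> transpose_mat (gram M) = gram M \<and>
            (\<forall>v\<in>carrier_vec N. v \<bullet> (gram M *\<^sub>v v) \<ge> 0)"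
proof (cases "b \<le> a")
  case True
  then have g: "gram M = transpose_mat M * M" using M unfolding gram_def by auto
  show ?thesis
    by (rule exI[of _ b]) (use M b g gram_psd[OF M] in \<open>auto simp: transpose_mult[of _ b a M b]\<close>)
next
  case False
  then have g: "gram M = transpose_mat (transpose_mat M) * transpose_mat M" using M unfolding gram_def by auto
  have Mt: "transpose_mat M \<in> carrier_mat b a" using M by auto
  show ?thesis
    by (rule exI[of _ a]) (use M a g gram_psd[OF Mt] in \<open>auto simp: transpose_mult[of _ a b _ a]\<close>)
qed

lemma sigma_max_sq:
  fixes M :: "real mat"
  assumes M: "M \<in> carrier_mat a b" and a: "a > 0" and b: "b > 0"
  shows "(sigma_max M)^2 = Max {ev. eigenvalue (gram M) ev}"
proof -
  obtain N where N: "gram M \<in> carrier_mat N N" "N > 0" "transpose_mat (gram M) = gram M"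
    "\<forall>v\<in>carrier_vec N. v \<bullet> (gram M *\<^sub>v v) \<ge> 0" using gram_props[OF M a b] by blast
  have "Max {ev. eigenvalue (gram M) ev} \<ge> 0" using eig_nonneg[OF N] by simp
  then show ?thesis using M a b unfolding sigma_max_def by simp
qed

lemma sigma_min_sq:
  fixes M :: "real mat"
  assumes M: "M \<in> carrier_mat a b" and a: "a > 0" and b: "b > 0"
  shows "(sigma_min M)^2 = Min {ev. eigenvalue (gram M) ev}"
proof -
  obtain N where N: "gram M \<in> carrier_mat N N" "N > 0" "transpose_mat (gram M) = gram M"
    "\<forall>v\<in>carrier_vec N. v \<bullet> (gram M *\<^sub>v v) \<ge> 0" using gram_props[OF M a b] by blast
  have "Min {ev. eigenvalue (gram M) ev} \<ge> 0" using eig_nonneg[OF N] by simp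
  then show ?thesis using M a b unfolding sigma_min_def by simp
qed

lemma fro2_empty_inner:
  fixes N :: "real mat"
  assumes N: "N \<in> carrier_mat a 0" and W: "W \<in> carrier_mat 0 l"
  shows "fro2 (N * W) = 0"
  using N W unfolding minner_def by (simp add: scalar_prod_def)

lemma sigma_max_bound:
  fixes N W :: "real mat"
  assumes N: "N \<in> carrier_mat a b" and W: "W \<in> carrier_mat b l"
  shows "fro2 (N * W) \<le> (sigma_max N)^2 * fro2 W"
proof (cases "a = 0 \<or> b = 0")
  case True
  then have "fro2 (N * W) = 0"
  proof
    assume "a = 0" then show ?thesis using N W unfolding minner_def by simp
  next
    assume "b = 0" then show ?thesis using fro2_empty_inner N W by simp
  qed
  moreover have "sigma_max N = 0" using True N unfolding sigma_max_def by auto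
  ultimately show ?thesis by simp
next
  case False
  then have a: "a > 0" and b: "b > 0" by auto
  have NW: "N * W \<in> carrier_mat a l" using N W by auto
  have Nt: "transpose_mat N \<in> carrier_mat b a" using N by auto
  note sq = sigma_max_sq[OF N a b]
  show ?thesis
  proof (cases "b \<le> a")
    case True
    then have g: "gram N = transpose_mat N * N" using N unfolding gram_def by auto
    have G: "gram N \<in> carrier_mat b b" using g N by auto
    have sym: "transpose_mat (gram N) = gram N" using g N by (simp add: transpose_mult[of _ b a N b])
    have "fro2 (N * W) = minner (transpose_mat N * (N * W)) W"
      by (rule minner_adj[OF NW N W])
    also have "transpose_mat N * (N * W) = gram N * W" using g N W by simp
    also have "minner (gram N * W) W = minner W (gram N * W)"
      using G W by (intro minner_comm[of _ b l]) auto
    also have "\<dots> \<le> Max {ev. eigenvalue (gram N) ev} * fro2 W"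
      by (rule mat_rayleigh(1)[OF G b sym W])
    finally show ?thesis using sq by simp
  next
    case False
    then have g: "gram N = N * transpose_mat N" using N unfolding gram_def by auto
    have G: "gram N \<in> carrier_mat a a" using g N by auto
    have sym: "transpose_mat (gram N) = gram N" using g N by (simp add: transpose_mult[of _ a b _ a])
    define u where "u = N * W"
    have u: "u \<in> carrier_mat a l" unfolding u_def using NW .
    have Ntu: "transpose_mat N * u \<in> carrier_mat b l" using Nt u by auto
    have e1: "fro2 u = minner (transpose_mat N * u) W" unfolding u_def by (rule minner_adj[OF NW N W])
    have "fro2 (transpose_mat N * u) = minner u (N * (transpose_mat N * u))"
      by (rule minner_adj[OF u N Ntu, symmetric])
    also have "N * (transpose_mat N * u) = gram N * u" using g N u by simp
    also have "minner u (gram N * u) \<le> Max {ev. eigenvalue (gram N) ev} * fro2 u"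
      by (rule mat_rayleigh(1)[OF G a sym u])
    finally have e2: "fro2 (transpose_mat N * u) \<le> Max {ev. eigenvalue (gram N) ev} * fro2 u" .
    have cs: "(fro2 u)^2 \<le> fro2 (transpose_mat N * u) * fro2 W"
      unfolding e1 by (rule cauchy_schwarz[OF Ntu W])
    define L where "L = Max {ev. eigenvalue (gram N) ev}"
    have L0: "L \<ge> 0" using sq unfolding L_def by (metis zero_le_power2)
    have F0: "fro2 u \<ge> 0" by (rule fro2_nonneg)
    have W0: "fro2 W \<ge> 0" by (rule fro2_nonneg)
    have "(fro2 u)^2 \<le> (L * fro2 u) * fro2 W"
      using cs e2 W0 unfolding L_def by (meson order_trans mult_right_mono)
    then have "fro2 u * fro2 u \<le> fro2 u * (L * fro2 W)" by (simp add: power2_eq_square mult_ac)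
    then have "fro2 u \<le> L * fro2 W" using F0 L0 W0
      by (cases "fro2 u = 0") (auto simp: mult_le_cancel_left)
    then show ?thesis using sq unfolding u_def L_def by simp
  qed
qed

lemma sigma_min_bound:
  fixes M D :: "real mat"
  assumes M: "M \<in> carrier_mat a b" and a: "a > 0" and b: "b > 0" and D: "D \<in> carrier_mat b l"
  shows "fro2 (transpose_mat M * (M * D)) \<ge> (sigma_min M)^2 * fro2 (M * D)"
proof -
  note sq = sigma_min_sq[OF M a b]
  have MD: "M * D \<in> carrier_mat a l" using M D by auto
  have Mt: "transpose_mat M \<in> carrier_mat b a" using M by auto
  define L where "L = Min {ev. eigenvalue (gram M) ev}"
  have L0: "L \<ge> 0" using sq unfolding L_def by (metis zero_le_power2)
  show ?thesis
  proof (cases "b \<le> a")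
    case True
    then have g: "gram M = transpose_mat M * M" using M unfolding gram_def by auto
    have G: "gram M \<in> carrier_mat b b" using g M by auto
    have sym: "transpose_mat (gram M) = gram M" using g M by (simp add: transpose_mult[of _ b a M b])
    have HD: "gram M * D \<in> carrier_mat b l" using G D by auto
    have e0: "transpose_mat M * (M * D) = gram M * D" using g M D by simp
    have "fro2 (M * D) = minner (transpose_mat M * (M * D)) D" by (rule minner_adj[OF MD M D])
    also have "\<dots> = minner D (gram M * D)" unfolding e0 using HD D by (rule minner_comm)
    finally have e1: "fro2 (M * D) = minner D (gram M * D)" .
    have r: "L * fro2 D \<le> fro2 (M * D)" unfolding e1 L_def by (rule mat_rayleigh(2)[OF G b sym D])
    have cs: "(fro2 (M * D))^2 \<le> fro2 D * fro2 (gram M * D)" unfolding e1 by (rule cauchy_schwarz[OF D HD])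
    define E where "E = fro2 (M * D)"
    define Z where "Z = fro2 (gram M * D)"
    have E0: "E \<ge> 0" unfolding E_def by (rule fro2_nonneg)
    have Z0: "Z \<ge> 0" unfolding Z_def by (rule fro2_nonneg)
    have D0: "fro2 D \<ge> 0" by (rule fro2_nonneg)
    have "L * E \<le> Z"
    proof (cases "L = 0 \<or> E = 0")
      case True then show ?thesis using Z0 by auto
    next
      case False
      then have Lp: "L > 0" and Ep: "E > 0" using L0 E0 by auto
      have "L * E^2 \<le> L * (fro2 D * Z)" using cs Lp unfolding E_def Z_def by simp
      also have "\<dots> = (L * fro2 D) * Z" by simp
      also have "\<dots> \<le> E * Z" using r Z0 unfolding E_def by (rule mult_right_mono)
      finally have "E * (L * E) \<le> E * Z" by (simp add: power2_eq_square mult_ac)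
      then show ?thesis using Ep by simp
    qed
    then show ?thesis using sq e0 unfolding E_def Z_def L_def by simp
  next
    case False
    then have g: "gram M = M * transpose_mat M" using M unfolding gram_def by auto
    have G: "gram M \<in> carrier_mat a a" using g M by auto
    have sym: "transpose_mat (gram M) = gram M" using g M by (simp add: transpose_mult[of _ a b _ a])
    have MtMD: "transpose_mat M * (M * D) \<in> carrier_mat b l" using Mt MD by auto
    have "fro2 (transpose_mat M * (M * D)) = minner (M * D) (M * (transpose_mat M * (M * D)))"
      by (rule minner_adj[OF MD M MtMD, symmetric])
    also have "M * (transpose_mat M * (M * D)) = gram M * (M * D)" using g M MD by simp
    also have "minner (M * D) (gram M * (M * D)) \<ge> L * fro2 (M * D)"
      unfolding L_def by (rule mat_rayleigh(2)[OF G a sym MD])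
    finally show ?thesis using sq unfolding L_def by simp
  qed
qed

lemma modp_ge: assumes "y \<le> x" "x < p" shows "(x + p - y) mod p = x - (y::nat)"
proof -
  have e: "x + p - y = (x - y) + p" using assms by simp
  have "(x + p - y) mod p = (x - y) mod p" unfolding e by (rule mod_add_self2)
  also have "\<dots> = x - y" using assms by (intro mod_less) simp
  finally show ?thesis .
qed

lemma modp_lt: assumes "x < y" "y < p" shows "(x + p - y) mod p = x + p - (y::nat)"
  using assms by (intro mod_less) simp

lemma modp0: assumes "x < p" "y < p" shows "((x + p - y) mod p = 0) = (x = (y::nat))"
proof (cases "y \<le> x")
  case True
  then show ?thesis using modp_ge[OF True assms(1)] by auto
next
  case False
  then show ?thesis using modp_lt[of x y p] assms by auto
qed

lemma modp_neg: assumes "x < p" "y < p"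
  shows "(p - (x + p - y) mod p) mod p = (y + p - (x::nat)) mod p"
proof (cases "y \<le> x")
  case True
  have e1: "(x + p - y) mod p = x - y" by (rule modp_ge[OF True assms(1)])
  have e2: "y + p - x = p - (x - y)" using True assms by simp
  show ?thesis unfolding e1 e2 ..
next
  case False
  then have xy: "x < y" by simp
  have e1: "(x + p - y) mod p = x + p - y" by (rule modp_lt[OF xy assms(2)])
  have e2: "p - (x + p - y) = y - x" using xy assms by simp
  have e3: "y + p - x = (y - x) + p" using xy by simp
  show ?thesis unfolding e1 e2 e3 by (rule mod_add_self2[symmetric])
qed

lemma bcirc_eq: assumes L: "L \<in> carrier_mat (a * p) b" and p: "p > 0"
  shows "bcirc p L = mat (a * p) (b * p) (\<lambda>(r, c). L $$ (((r div a + p - c div b) mod p) * a + r mod a, c mod b))"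
  using L p unfolding bcirc_def Let_def by simp

lemma div_mod_lt: assumes "q < p" "t < (n::nat)" shows "q * n + t < n * p"
proof -
  have "q * n + t < q * n + n" using assms by simp
  also have "\<dots> = (q + 1) * n" by simp
  also have "\<dots> \<le> p * n" using assms by (intro mult_right_mono) auto
  finally show ?thesis by (simp add: mult.commute)
qed

lemma le_mult_self: "q \<noteq> 0 \<Longrightarrow> (n::nat) \<le> q * n" by (cases q) auto

lemma lin_eq: "x < n \<Longrightarrow> t < n \<Longrightarrow> (q * n + x = t) = (q = 0 \<and> x = (t::nat))"
  by (cases q) auto

lemma dm_eq: "t < n \<Longrightarrow> (r = d * n + t) = (r div n = d \<and> r mod n = (t::nat))"
proof
  assume "t < n" "r = d * n + t" then show "r div n = d \<and> r mod n = t" by simp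
next
  assume "r div n = d \<and> r mod n = t"
  then show "r = d * n + t" by (metis div_mult_mod_eq)
qed

definition sel :: "nat \<Rightarrow> nat set \<Rightarrow> nat \<Rightarrow> nat" where
  "sel n \<tau> c = (c div card \<tau>) * n + sorted_list_of_set \<tau> ! (c mod card \<tau>)"

lemma sl_nth: fixes \<tau> :: "nat set" assumes "\<tau> \<subseteq> {..<n}" "i < card \<tau>"
  shows "sorted_list_of_set \<tau> ! i \<in> \<tau>" "sorted_list_of_set \<tau> ! i < n"
proof -
  have fin: "finite \<tau>" by (rule finite_subset[OF assms(1)]) simp
  have "i < length (sorted_list_of_set \<tau>)" using assms fin by simp
  then have "sorted_list_of_set \<tau> ! i \<in> set (sorted_list_of_set \<tau>)" by (rule nth_mem)
  then show "sorted_list_of_set \<tau> ! i \<in> \<tau>" using fin by simp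
  then show "sorted_list_of_set \<tau> ! i < n" using assms by auto
qed

lemma sel_props: assumes tau: "\<tau> \<subseteq> {..<n}" and c: "c < card \<tau> * p"
  shows "sel n \<tau> c < n * p" "sel n \<tau> c div n = c div card \<tau>"
    "sel n \<tau> c mod n = sorted_list_of_set \<tau> ! (c mod card \<tau>)"
proof -
  have k: "card \<tau> > 0" using c by (cases "card \<tau>") auto
  have t: "sorted_list_of_set \<tau> ! (c mod card \<tau>) < n" using sl_nth[OF tau] k by simp
  have "c < p * card \<tau>" using c by (simp add: mult.commute)
  then have q: "c div card \<tau> < p" by (rule less_mult_imp_div_less)
  show "sel n \<tau> c < n * p" unfolding sel_def by (rule div_mod_lt[OF q t])
  show "sel n \<tau> c div n = c div card \<tau>" unfolding sel_def using t by simp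
  show "sel n \<tau> c mod n = sorted_list_of_set \<tau> ! (c mod card \<tau>)" unfolding sel_def using t by simp
qed

lemma Q_eq: assumes tau: "\<tau> \<subseteq> {..<n}" and p: "p > 0"
  shows "bcirc p (Etau n p \<tau>) = mat (n * p) (card \<tau> * p) (\<lambda>(r, c). if r = sel n \<tau> c then 1 else 0)"
proof -
  have E: "Etau n p \<tau> \<in> carrier_mat (n * p) (card \<tau>)" unfolding Etau_def by simp
  show ?thesis unfolding bcirc_eq[OF E p]
  proof (rule eq_matI)
    fix r c assume r: "r < dim_row (mat (n * p) (card \<tau> * p) (\<lambda>(r, c). if r = sel n \<tau> c then 1 else (0::real)))"
      and c: "c < dim_col (mat (n * p) (card \<tau> * p) (\<lambda>(r, c). if r = sel n \<tau> c then 1 else (0::real)))"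
    then have r: "r < n * p" and c: "c < card \<tau> * p" by auto
    define k where "k = card \<tau>"
    have k: "k > 0" using c unfolding k_def by (cases "card \<tau>") auto
    have n: "n > 0" using r by (cases n) auto
    define t where "t = sorted_list_of_set \<tau> ! (c mod k)"
    have t: "t < n" unfolding t_def k_def using sl_nth[OF tau] k k_def by simp
    have "r < p * n" using r by (simp add: mult.commute)
    then have rq: "r div n < p" by (rule less_mult_imp_div_less)
    have "c < p * k" using c unfolding k_def by (simp add: mult.commute)
    then have cq: "c div k < p" by (rule less_mult_imp_div_less)
    define R where "R = ((r div n + p - c div k) mod p) * n + r mod n"
    have Rlt: "R < n * p" unfolding R_def using n p by (intro div_mod_lt) auto
    have iff: "(R = t) = (r = sel n \<tau> c)"
    proof -
      have "(R = t) = ((r div n + p - c div k) mod p = 0 \<and> r mod n = t)"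
        unfolding R_def by (rule lin_eq) (use n t in auto)
      also have "\<dots> = (r div n = c div k \<and> r mod n = t)" using modp0[OF rq cq] by simp
      also have "\<dots> = (r = (c div k) * n + t)" by (rule dm_eq[symmetric]) (rule t)
      also have "\<dots> = (r = sel n \<tau> c)" unfolding sel_def t_def k_def ..
      finally show ?thesis .
    qed
    show "mat (n * p) (card \<tau> * p) (\<lambda>(r, c). Etau n p \<tau> $$ (((r div n + p - c div card \<tau>) mod p) * n + r mod n, c mod card \<tau>)) $$ (r, c) =
          mat (n * p) (card \<tau> * p) (\<lambda>(r, c). if r = sel n \<tau> c then 1 else 0) $$ (r, c)"
      using r c Rlt iff k unfolding R_def t_def k_def Etau_def by simp
  qed auto
qed

lemma mult_entry:
  fixes A B :: "real mat"
  assumes A: "A \<in> carrier_mat a b" and B: "B \<in> carrier_mat b c" and i: "i < a" and j: "j < c"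
  shows "(A * B) $$ (i, j) = (\<Sum>s<b. A $$ (i, s) * B $$ (s, j))"
proof -
  have "(A * B) $$ (i, j) = row A i \<bullet> col B j" using A B i j by simp
  also have "\<dots> = (\<Sum>s<b. A $$ (i, s) * B $$ (s, j))"
    unfolding scalar_prod_def using A B i j by (auto simp: lessThan_atLeast0 intro!: sum.cong)
  finally show ?thesis .
qed

lemma sum_single: "s0 < (N::nat) \<Longrightarrow> (\<Sum>s<N. f s * (if s = s0 then 1 else (0::real))) = f s0"
proof -
  assume s0: "s0 < N"
  have "(\<Sum>s<N. f s * (if s = s0 then 1 else (0::real))) = (\<Sum>s<N. if s = s0 then f s else 0)"
    by (intro sum.cong) auto
  also have "\<dots> = f s0" using s0 by (simp add: sum.delta)
  finally show ?thesis .
qed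

lemma Etau_carrier: "Etau n p \<tau> \<in> carrier_mat (n * p) (card \<tau>)" unfolding Etau_def by simp

lemma Etau_entry: "s < n * p \<Longrightarrow> c < card \<tau> \<Longrightarrow> Etau n p \<tau> $$ (s, c) = (if s = sorted_list_of_set \<tau> ! c then 1 else 0)"
  unfolding Etau_def by simp

lemma M_entry: assumes A: "A \<in> carrier_mat (m * p) n" and p: "p > 0" and r: "r < m * p" and s: "s < n * p"
  shows "bcirc p A $$ (r, s) = A $$ (((r div m + p - s div n) mod p) * m + r mod m, s mod n)"
  using r s unfolding bcirc_eq[OF A p] by simp

lemma M_carrier: assumes A: "A \<in> carrier_mat (m * p) n" and p: "p > 0"
  shows "bcirc p A \<in> carrier_mat (m * p) (n * p)"
  unfolding bcirc_eq[OF A p] by simp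

lemma Q_carrier: assumes tau: "\<tau> \<subseteq> {..<n}" and p: "p > 0"
  shows "bcirc p (Etau n p \<tau>) \<in> carrier_mat (n * p) (card \<tau> * p)"
  unfolding Q_eq[OF tau p] by simp

lemma Q_entry: assumes tau: "\<tau> \<subseteq> {..<n}" and p: "p > 0" and s: "s < n * p" and c: "c < card \<tau> * p"
  shows "bcirc p (Etau n p \<tau>) $$ (s, c) = (if s = sel n \<tau> c then 1 else 0)"
  unfolding Q_eq[OF tau p] using s c by simp

lemma MQ:
  assumes A: "A \<in> carrier_mat (m * p) n" and tau: "\<tau> \<subseteq> {..<n}" and p: "p > 0"
  shows "bcirc p A * bcirc p (Etau n p \<tau>) = bcirc p (bcirc p A * Etau n p \<tau>)"
proof -
  define k where "k = card \<tau>"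
  define M where "M = bcirc p A"
  define Q where "Q = bcirc p (Etau n p \<tau>)"
  have Mc: "M \<in> carrier_mat (m * p) (n * p)" unfolding M_def by (rule M_carrier[OF A p])
  have Qc: "Q \<in> carrier_mat (n * p) (k * p)" unfolding Q_def k_def by (rule Q_carrier[OF tau p])
  have Lc: "M * Etau n p \<tau> \<in> carrier_mat (m * p) k" using Mc Etau_carrier[of n p \<tau>] unfolding k_def by auto
  show ?thesis unfolding M_def[symmetric] Q_def[symmetric] bcirc_eq[OF Lc p]
  proof (rule eq_matI)
    fix r c assume "r < dim_row (mat (m * p) (k * p) (\<lambda>(r, c). (M * Etau n p \<tau>) $$ (((r div m + p - c div k) mod p) * m + r mod m, c mod k)))"
      "c < dim_col (mat (m * p) (k * p) (\<lambda>(r, c). (M * Etau n p \<tau>) $$ (((r div m + p - c div k) mod p) * m + r mod m, c mod k)))"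
    then have r: "r < m * p" and c: "c < k * p" by auto
    have kp: "k > 0" using c by (cases k) auto
    have m: "m > 0" using r by (cases m) auto
    define t where "t = sorted_list_of_set \<tau> ! (c mod k)"
    have t: "t < n" unfolding t_def k_def using sl_nth(2)[OF tau] kp k_def by simp
    have n: "n > 0" using t by simp
    have tnp: "t < n * p" using div_mod_lt[of 0 p t n] p t by simp
    have sc: "sel n \<tau> c < n * p" "sel n \<tau> c div n = c div k" "sel n \<tau> c mod n = t"
      using sel_props[OF tau] c unfolding k_def t_def by auto
    have "(M * Q) $$ (r, c) = (\<Sum>s<n * p. M $$ (r, s) * Q $$ (s, c))" by (rule mult_entry[OF Mc Qc r c])
    also have "\<dots> = (\<Sum>s<n * p. M $$ (r, s) * (if s = sel n \<tau> c then 1 else 0))"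
      unfolding Q_def using Q_entry[OF tau p _ c[unfolded k_def]] by (intro sum.cong) auto
    also have "\<dots> = M $$ (r, sel n \<tau> c)" by (rule sum_single[OF sc(1)])
    also have "\<dots> = A $$ (((r div m + p - c div k) mod p) * m + r mod m, t)"
      unfolding M_def using M_entry[OF A p r sc(1)] sc by simp
    finally have lhs: "(M * Q) $$ (r, c) = A $$ (((r div m + p - c div k) mod p) * m + r mod m, t)" .
    define R where "R = ((r div m + p - c div k) mod p) * m + r mod m"
    have Rlt: "R < m * p" unfolding R_def using m p by (intro div_mod_lt) auto
    have cmk: "c mod k < k" using kp by simp
    have "(M * Etau n p \<tau>) $$ (R, c mod k) = (\<Sum>s<n * p. M $$ (R, s) * Etau n p \<tau> $$ (s, c mod k))"
      by (rule mult_entry[OF Mc Etau_carrier Rlt]) (use cmk k_def in simp)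
    also have "\<dots> = (\<Sum>s<n * p. M $$ (R, s) * (if s = t then 1 else 0))"
      using Etau_entry[of _ n p "c mod k" \<tau>] cmk unfolding t_def k_def by (intro sum.cong) auto
    also have "\<dots> = M $$ (R, t)" by (rule sum_single[OF tnp])
    also have "\<dots> = A $$ (((R div m + p - t div n) mod p) * m + R mod m, t mod n)"
      unfolding M_def by (rule M_entry[OF A p Rlt tnp])
    also have "R div m = (r div m + p - c div k) mod p" unfolding R_def using m by simp
    also have "R mod m = r mod m" unfolding R_def using m by simp
    also have "t div n = 0" using t by simp
    also have "t mod n = t" using t by simp
    also have "((r div m + p - c div k) mod p + p - 0) mod p = (r div m + p - c div k) mod p" by simp
    finally have rhs: "(M * Etau n p \<tau>) $$ (R, c mod k) = A $$ (((r div m + p - c div k) mod p) * m + r mod m, t)" .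
    show "(M * Q) $$ (r, c) = mat (m * p) (k * p) (\<lambda>(r, c). (M * Etau n p \<tau>) $$ (((r div m + p - c div k) mod p) * m + r mod m, c mod k)) $$ (r, c)"
      using lhs rhs r c unfolding R_def by simp
  qed (use Mc Qc in auto)
qed

lemma TT:
  assumes L: "L \<in> carrier_mat (m * p) k" and p: "p > 0"
  shows "bcirc p (ttrans p L) = transpose_mat (bcirc p L)"
proof -
  have Te: "ttrans p L = mat (k * p) m (\<lambda>(r, c). L $$ (((p - r div k) mod p) * m + c, r mod k))"
    using L p unfolding ttrans_def Let_def by simp
  have Tc: "ttrans p L \<in> carrier_mat (k * p) m" unfolding Te by simp
  show ?thesis unfolding bcirc_eq[OF Tc p] bcirc_eq[OF L p]
  proof (rule eq_matI)
    fix r c assume "r < dim_row (transpose_mat (mat (m * p) (k * p) (\<lambda>(r, c). L $$ (((r div m + p - c div k) mod p) * m + r mod m, c mod k))))"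
      "c < dim_col (transpose_mat (mat (m * p) (k * p) (\<lambda>(r, c). L $$ (((r div m + p - c div k) mod p) * m + r mod m, c mod k))))"
    then have r: "r < k * p" and c: "c < m * p" by auto
    have kp: "k > 0" using r by (cases k) auto
    have m: "m > 0" using c by (cases m) auto
    have "r < p * k" using r by (simp add: mult.commute)
    then have rq: "r div k < p" by (rule less_mult_imp_div_less)
    have "c < p * m" using c by (simp add: mult.commute)
    then have cq: "c div m < p" by (rule less_mult_imp_div_less)
    define R where "R = ((r div k + p - c div m) mod p) * k + r mod k"
    have Rlt: "R < k * p" unfolding R_def using kp p by (intro div_mod_lt) auto
    have cm: "c mod m < m" using m by simp
    have Rd: "R div k = (r div k + p - c div m) mod p" unfolding R_def using kp by simp
    have Rm: "R mod k = r mod k" unfolding R_def using kp by simp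
    have "ttrans p L $$ (R, c mod m) = L $$ (((p - R div k) mod p) * m + c mod m, R mod k)"
      unfolding Te using Rlt cm by simp
    also have "(p - R div k) mod p = (c div m + p - r div k) mod p" unfolding Rd by (rule modp_neg[OF rq cq])
    finally have "ttrans p L $$ (R, c mod m) = L $$ (((c div m + p - r div k) mod p) * m + c mod m, r mod k)"
      unfolding Rm .
    then show "mat (k * p) (m * p) (\<lambda>(r, c). ttrans p L $$ (((r div k + p - c div m) mod p) * k + r mod k, c mod m)) $$ (r, c) =
         transpose_mat (mat (m * p) (k * p) (\<lambda>(r, c). L $$ (((r div m + p - c div k) mod p) * m + r mod m, c mod k))) $$ (r, c)"
      using r c unfolding R_def by simp
  qed auto
qed

lemma step_eq:
  assumes A: "A \<in> carrier_mat (m * p) n" and tau: "\<tau> \<subseteq> {..<n}" and p: "p > 0"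
  shows "trbags_step n p A B \<omega> X \<tau> = X - \<omega> \<cdot>\<^sub>m (bcirc p (Etau n p \<tau>) *
           (transpose_mat (bcirc p A * bcirc p (Etau n p \<tau>)) * (bcirc p A * X - B)))"
proof -
  have Lc: "bcirc p A * Etau n p \<tau> \<in> carrier_mat (m * p) (card \<tau>)"
    using M_carrier[OF A p] Etau_carrier[of n p \<tau>] by auto
  show ?thesis unfolding trbags_step_def tprod_def lat_slices_def TT[OF Lc p] MQ[OF A tau p] ..
qed

lemma sel_bij: assumes tau: "\<tau> \<subseteq> {..<n}" and n: "n > 0"
  shows "bij_betw (sel n \<tau>) {..<card \<tau> * p} {s \<in> {..<n * p}. s mod n \<in> \<tau>}"
proof -
  define k where "k = card \<tau>"
  define xs where "xs = sorted_list_of_set \<tau>"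
  have fin: "finite \<tau>" by (rule finite_subset[OF tau]) simp
  have xs: "distinct xs" "length xs = k" "set xs = \<tau>" unfolding xs_def k_def using fin by auto
  show ?thesis unfolding bij_betw_def
  proof (intro conjI)
    show "inj_on (sel n \<tau>) {..<card \<tau> * p}"
    proof (rule inj_onI)
      fix c c' assume c: "c \<in> {..<card \<tau> * p}" and c': "c' \<in> {..<card \<tau> * p}" and e: "sel n \<tau> c = sel n \<tau> c'"
      have cl: "c < card \<tau> * p" and cl': "c' < card \<tau> * p" using c c' by auto
      have kp: "k > 0" using cl unfolding k_def by (cases "card \<tau>") auto
      have d: "c div k = c' div k" using sel_props(2)[OF tau cl] sel_props(2)[OF tau cl'] e unfolding k_def by simp
      have "xs ! (c mod k) = xs ! (c' mod k)" using sel_props(3)[OF tau cl] sel_props(3)[OF tau cl'] e unfolding k_def xs_def by simp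
      then have m: "c mod k = c' mod k" using nth_eq_iff_index_eq[OF xs(1)] xs(2) kp by simp
      have "c = c div k * k + c mod k" by simp
      also have "\<dots> = c' div k * k + c' mod k" using d m by simp
      also have "\<dots> = c'" by simp
      finally show "c = c'" .
    qed
    show "sel n \<tau> ` {..<card \<tau> * p} = {s \<in> {..<n * p}. s mod n \<in> \<tau>}"
    proof
      show "sel n \<tau> ` {..<card \<tau> * p} \<subseteq> {s \<in> {..<n * p}. s mod n \<in> \<tau>}"
      proof
        fix s assume "s \<in> sel n \<tau> ` {..<card \<tau> * p}"
        then obtain c where c: "c < card \<tau> * p" and s: "s = sel n \<tau> c" by auto
        have kp: "card \<tau> > 0" using c by (cases "card \<tau>") auto
        show "s \<in> {s \<in> {..<n * p}. s mod n \<in> \<tau>}"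
          using sel_props[OF tau c] sl_nth(1)[OF tau, of "c mod card \<tau>"] kp s by simp
      qed
      show "{s \<in> {..<n * p}. s mod n \<in> \<tau>} \<subseteq> sel n \<tau> ` {..<card \<tau> * p}"
      proof
        fix s assume "s \<in> {s \<in> {..<n * p}. s mod n \<in> \<tau>}"
        then have s: "s < n * p" and sm: "s mod n \<in> \<tau>" by auto
        have "\<exists>i<length xs. xs ! i = s mod n" using sm xs(3) by (simp add: in_set_conv_nth[symmetric])
        then obtain i where i: "i < k" and xi: "xs ! i = s mod n" using xs(2) by auto
        have "s < p * n" using s by (simp add: mult.commute)
        then have sq: "s div n < p" by (rule less_mult_imp_div_less)
        define c where "c = (s div n) * k + i"
        have cl: "c < k * p" unfolding c_def by (rule div_mod_lt[OF sq i])
        have cd: "c div k = s div n" "c mod k = i" unfolding c_def using i by auto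
        have "sel n \<tau> c = (s div n) * n + s mod n" unfolding sel_def using cd xi unfolding xs_def k_def by simp
        also have "\<dots> = s" by simp
        finally have "sel n \<tau> c = s" .
        then show "s \<in> sel n \<tau> ` {..<card \<tau> * p}" using cl unfolding k_def by (intro image_eqI[of s "sel n \<tau>" c]) auto
      qed
    qed
  qed
qed

lemma QtV:
  fixes V :: "real mat"
  assumes tau: "\<tau> \<subseteq> {..<n}" and p: "p > 0" and n: "n > 0" and V: "V \<in> carrier_mat (n * p) l"
  shows "fro2 (transpose_mat (bcirc p (Etau n p \<tau>)) * V) =
         (\<Sum>s\<in>{s \<in> {..<n * p}. s mod n \<in> \<tau>}. \<Sum>j<l. V $$ (s, j) * V $$ (s, j))"
proof -
  define Q where "Q = bcirc p (Etau n p \<tau>)"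
  define k where "k = card \<tau>"
  have Qc: "Q \<in> carrier_mat (n * p) (k * p)" unfolding Q_def k_def by (rule Q_carrier[OF tau p])
  have Qtc: "transpose_mat Q \<in> carrier_mat (k * p) (n * p)" using Qc by auto
  have QV: "transpose_mat Q * V \<in> carrier_mat (k * p) l" using Qtc V by auto
  have ent: "(transpose_mat Q * V) $$ (c, j) = V $$ (sel n \<tau> c, j)" if c: "c < k * p" and j: "j < l" for c j
  proof -
    have sc: "sel n \<tau> c < n * p" using sel_props(1)[OF tau] c unfolding k_def by simp
    have "(transpose_mat Q * V) $$ (c, j) = (\<Sum>s<n * p. transpose_mat Q $$ (c, s) * V $$ (s, j))"
      by (rule mult_entry[OF Qtc V c j])
    also have "\<dots> = (\<Sum>s<n * p. V $$ (s, j) * (if s = sel n \<tau> c then 1 else 0))"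
      using Qc c Q_entry[OF tau p _ c[unfolded k_def]] unfolding Q_def k_def by (intro sum.cong) auto
    also have "\<dots> = V $$ (sel n \<tau> c, j)" by (rule sum_single[OF sc])
    finally show ?thesis .
  qed
  have "fro2 (transpose_mat Q * V) = (\<Sum>c<k * p. \<Sum>j<l. V $$ (sel n \<tau> c, j) * V $$ (sel n \<tau> c, j))"
    unfolding minner_def carrier_matD[OF QV]
  proof (intro sum.cong refl)
    fix c j assume "c \<in> {..<k * p}" "j \<in> {..<l}"
    then have "c < k * p" "j < l" by auto
    then show "(transpose_mat Q * V) $$ (c, j) * (transpose_mat Q * V) $$ (c, j) = V $$ (sel n \<tau> c, j) * V $$ (sel n \<tau> c, j)"
      by (simp only: ent)
  qed
  also have "\<dots> = (\<Sum>s\<in>{s \<in> {..<n * p}. s mod n \<in> \<tau>}. \<Sum>j<l. V $$ (s, j) * V $$ (s, j))"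
    unfolding k_def by (rule sum.reindex_bij_betw[OF sel_bij[OF tau n]])
  finally show ?thesis unfolding Q_def .
qed

lemma cmin_sum:
  fixes h :: "nat \<Rightarrow> real"
  assumes T: "finite T" and n: "n > 0" and h: "\<And>s. h s \<ge> 0"
  shows "(\<Sum>\<tau>\<in>T. \<Sum>s\<in>{s \<in> {..<n * p}. s mod n \<in> \<tau>}. h s) \<ge> real (c_min n T) * (\<Sum>s<n * p. h s)"
proof -
  have "(\<Sum>\<tau>\<in>T. \<Sum>s\<in>{s \<in> {..<n * p}. s mod n \<in> \<tau>}. h s) = (\<Sum>\<tau>\<in>T. \<Sum>s<n * p. if s mod n \<in> \<tau> then h s else 0)"
    by (intro sum.cong refl sum.inter_filter) simp
  also have "\<dots> = (\<Sum>s<n * p. \<Sum>\<tau>\<in>T. if s mod n \<in> \<tau> then h s else 0)" by (rule sum.swap)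
  also have "\<dots> = (\<Sum>s<n * p. real (card {\<tau> \<in> T. s mod n \<in> \<tau>}) * h s)"
  proof (intro sum.cong refl)
    fix s
    have "(\<Sum>\<tau>\<in>T. if s mod n \<in> \<tau> then h s else 0) = (\<Sum>\<tau>\<in>{\<tau> \<in> T. s mod n \<in> \<tau>}. h s)"
      by (rule sum.inter_filter[OF T, symmetric])
    also have "\<dots> = real (card {\<tau> \<in> T. s mod n \<in> \<tau>}) * h s" by simp
    finally show "(\<Sum>\<tau>\<in>T. if s mod n \<in> \<tau> then h s else 0) = real (card {\<tau> \<in> T. s mod n \<in> \<tau>}) * h s" .
  qed
  also have "\<dots> \<ge> (\<Sum>s<n * p. real (c_min n T) * h s)"
  proof (rule sum_mono)
    fix s assume "s \<in> {..<n * p}"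
    have sn: "s mod n < n" using n by simp
    have "c_min n T \<le> card {\<tau> \<in> T. s mod n \<in> \<tau>}"
      unfolding c_min_def by (rule Min_le) (use sn in auto)
    then show "real (c_min n T) * h s \<le> real (card {\<tau> \<in> T. s mod n \<in> \<tau>}) * h s"
      using h[of s] by (intro mult_right_mono) auto
  qed
  finally show ?thesis by (simp add: sum_distrib_left)
qed

lemma one_step_alg:
  fixes M Q X Xdd B :: "real mat"
  assumes M: "M \<in> carrier_mat a b" and Q: "Q \<in> carrier_mat b K"
    and X: "X \<in> carrier_mat b l" and Xdd: "Xdd \<in> carrier_mat b l" and B: "B \<in> carrier_mat a l"
    and normal: "transpose_mat M * (M * Xdd - B) = 0\<^sub>m b l"
  shows "M * (X - \<omega> \<cdot>\<^sub>m (Q * (transpose_mat (M * Q) * (M * X - B)))) - M * Xdd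
           = (M * X - M * Xdd) - \<omega> \<cdot>\<^sub>m ((M * Q) * (transpose_mat (M * Q) * (M * X - M * Xdd)))"
    and "transpose_mat (M * Q) * (M * X - M * Xdd) = transpose_mat Q * (transpose_mat M * (M * X - M * Xdd))"
proof -
  define e where "e = M * X - M * Xdd"
  define R where "R = M * Xdd - B"
  have ec: "e \<in> carrier_mat a l" unfolding e_def using M X Xdd by auto
  have Rc: "R \<in> carrier_mat a l" unfolding R_def using M Xdd B by auto
  have Mt: "transpose_mat M \<in> carrier_mat b a" using M by auto
  have Qt: "transpose_mat Q \<in> carrier_mat K b" using Q by auto
  have tN: "transpose_mat (M * Q) = transpose_mat Q * transpose_mat M" by (rule transpose_mult[OF M Q])
  have split: "M * X - B = e + R" unfolding e_def R_def using M X Xdd B by (intro eq_matI) auto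
  have tNe: "transpose_mat (M * Q) * e = transpose_mat Q * (transpose_mat M * e)"
    unfolding tN using Qt Mt ec by simp
  then show "transpose_mat (M * Q) * (M * X - M * Xdd) = transpose_mat Q * (transpose_mat M * (M * X - M * Xdd))"
    unfolding e_def .
  have tNR: "transpose_mat (M * Q) * R = 0\<^sub>m K l"
    unfolding tN using Qt Mt Rc normal unfolding R_def[symmetric] by (simp add: right_mult_zero_mat[OF Qt])
  have NtC: "transpose_mat (M * Q) \<in> carrier_mat K a" using M Q by auto
  have W: "transpose_mat (M * Q) * (M * X - B) = transpose_mat (M * Q) * e"
    unfolding split mult_add_distrib_mat[OF NtC ec Rc] tNR using NtC ec by simp
  define W' where "W' = transpose_mat (M * Q) * e"
  have W'c: "W' \<in> carrier_mat K l" unfolding W'_def using NtC ec by auto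
  have QW: "Q * W' \<in> carrier_mat b l" using Q W'c by auto
  have "M * (X - \<omega> \<cdot>\<^sub>m (Q * W')) = M * X - M * (\<omega> \<cdot>\<^sub>m (Q * W'))"
    using M X QW by (intro mult_minus_distrib_mat) auto
  also have "M * (\<omega> \<cdot>\<^sub>m (Q * W')) = \<omega> \<cdot>\<^sub>m (M * (Q * W'))" by (rule mult_smult_distrib[OF M QW])
  also have "M * (Q * W') = (M * Q) * W'" using M Q W'c by simp
  finally have "M * (X - \<omega> \<cdot>\<^sub>m (Q * W')) = M * X - \<omega> \<cdot>\<^sub>m ((M * Q) * W')" .
  moreover have "M * X - \<omega> \<cdot>\<^sub>m ((M * Q) * W') - M * Xdd = e - \<omega> \<cdot>\<^sub>m ((M * Q) * W')"
    unfolding e_def using M X Xdd Q W'c by (intro eq_matI) auto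
  ultimately show "M * (X - \<omega> \<cdot>\<^sub>m (Q * (transpose_mat (M * Q) * (M * X - B)))) - M * Xdd
           = (M * X - M * Xdd) - \<omega> \<cdot>\<^sub>m ((M * Q) * (transpose_mat (M * Q) * (M * X - M * Xdd)))"
    unfolding W W'_def e_def by simp
qed

lemma one_step_norm:
  fixes N e :: "real mat"
  assumes N: "N \<in> carrier_mat a K" and e: "e \<in> carrier_mat a l"
    and s: "(sigma_max N)^2 \<le> s2" and w: "\<omega> > 0"
  shows "fro2 (e - \<omega> \<cdot>\<^sub>m (N * (transpose_mat N * e))) \<le> fro2 e - (2 * \<omega> - \<omega>^2 * s2) * fro2 (transpose_mat N * e)"
proof -
  define W where "W = transpose_mat N * e"
  have Wc: "W \<in> carrier_mat K l" unfolding W_def using N e by auto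
  have NW: "N * W \<in> carrier_mat a l" using N Wc by auto
  have "fro2 (e - \<omega> \<cdot>\<^sub>m (N * W)) = fro2 e - 2 * \<omega> * minner e (N * W) + \<omega>^2 * fro2 (N * W)"
    by (rule fro2_minus[OF e NW])
  also have "minner e (N * W) = fro2 W" using minner_adj[OF e N Wc] by (simp add: W_def)
  also have "fro2 (N * W) \<le> s2 * fro2 W"
  proof -
    have "fro2 (N * W) \<le> (sigma_max N)^2 * fro2 W" by (rule sigma_max_bound[OF N Wc])
    also have "\<dots> \<le> s2 * fro2 W" using s fro2_nonneg[of W] by (rule mult_right_mono)
    finally show ?thesis .
  qed
  then have "\<omega>^2 * fro2 (N * W) \<le> \<omega>^2 * (s2 * fro2 W)" by (intro mult_left_mono) auto
  ultimately show ?thesis unfolding W_def[symmetric] by (simp add: algebra_simps)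
qed

lemma lists_Suc:
  "{xs. set xs \<subseteq> T \<and> length xs = Suc k} = (\<lambda>(xs, x). xs @ [x]) ` ({xs. set xs \<subseteq> T \<and> length xs = k} \<times> T)"
proof
  show "{xs. set xs \<subseteq> T \<and> length xs = Suc k} \<subseteq> (\<lambda>(xs, x). xs @ [x]) ` ({xs. set xs \<subseteq> T \<and> length xs = k} \<times> T)"
  proof
    fix ys assume ys: "ys \<in> {xs. set xs \<subseteq> T \<and> length xs = Suc k}"
    then have "ys \<noteq> []" by auto
    then have "ys = butlast ys @ [last ys]" by simp
    moreover have "butlast ys \<in> {xs. set xs \<subseteq> T \<and> length xs = k}" using ys by (auto dest: in_set_butlastD)
    moreover have "last ys \<in> T" using ys \<open>ys \<noteq> []\<close> by auto
    ultimately show "ys \<in> (\<lambda>(xs, x). xs @ [x]) ` ({xs. set xs \<subseteq> T \<and> length xs = k} \<times> T)"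
      by (intro image_eqI[of ys _ "(butlast ys, last ys)"]) auto
  qed
qed auto

lemma expect_Suc:
  assumes T: "finite T"
  shows "expect_blocks T (Suc k) f =
    (\<Sum>xs\<in>{xs. set xs \<subseteq> T \<and> length xs = k}. \<Sum>x\<in>T. f (xs @ [x])) / real (card T) ^ Suc k"
proof -
  let ?L = "{xs. set xs \<subseteq> T \<and> length xs = k}"
  have inj: "inj_on (\<lambda>(xs, x). xs @ [x]) (?L \<times> T)" by (auto intro!: inj_onI)
  have fin: "finite ?L" by (rule finite_lists_length_eq[OF T])
  let ?h = "\<lambda>(xs, x). xs @ [x]"
  have "(\<Sum>ys\<in>{xs. set xs \<subseteq> T \<and> length xs = Suc k}. f ys) = sum f (?h ` (?L \<times> T))"
    unfolding lists_Suc ..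
  also have "\<dots> = sum (f \<circ> ?h) (?L \<times> T)" by (rule sum.reindex[OF inj])
  also have "\<dots> = sum (\<lambda>(xs, x). f (xs @ [x])) (?L \<times> T)" by (intro sum.cong) auto
  also have "\<dots> = (\<Sum>xs\<in>?L. \<Sum>x\<in>T. f (xs @ [x]))" by (rule sum.cartesian_product[symmetric])
  finally show ?thesis unfolding expect_blocks_def by simp
qed

lemma expect_0: "expect_blocks T 0 f = f []"
proof -
  have "{xs. set xs \<subseteq> T \<and> length xs = 0} = {[]}" by auto
  then show ?thesis unfolding expect_blocks_def by simp
qed

lemma expect_mono:
  assumes "\<And>xs. set xs \<subseteq> T \<Longrightarrow> length xs = k \<Longrightarrow> f xs \<le> g xs"
  shows "expect_blocks T k f \<le> expect_blocks T k g"
  unfolding expect_blocks_def using assms by (intro divide_right_mono sum_mono) auto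

lemma expect_scale: "expect_blocks T k (\<lambda>xs. c * f xs) = c * expect_blocks T k f"
  unfolding expect_blocks_def by (simp add: sum_distrib_left)

lemma expect_nonneg: "(\<And>xs. f xs \<ge> 0) \<Longrightarrow> expect_blocks T k f \<ge> 0"
  unfolding expect_blocks_def by (intro divide_nonneg_nonneg sum_nonneg) auto

lemma gram_quad:
  fixes M :: "real mat"
  assumes M: "M \<in> carrier_mat a b" and v: "v \<in> carrier_vec b"
  shows "v \<bullet> ((transpose_mat M * M) *\<^sub>v v) = (M *\<^sub>v v) \<bullet> (M *\<^sub>v v)"
proof -
  have "(transpose_mat M * M) *\<^sub>v v = transpose_mat M *\<^sub>v (M *\<^sub>v v)"
    using M v by (simp add: assoc_mult_mat_vec)
  then show ?thesis using vec_adj[OF M v, of "M *\<^sub>v v"] M v by simp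
qed

lemma vec_sq_zero:
  fixes w :: "real vec"
  assumes w: "w \<in> carrier_vec a" and z: "w \<bullet> w = 0"
  shows "w = 0\<^sub>v a"
proof (rule eq_vecI)
  fix i assume "i < dim_vec (0\<^sub>v a)"
  then have i: "i < a" by simp
  have "w $ i * w $ i \<le> (\<Sum>j\<in>{0..<a}. w $ j * w $ j)" using i by (intro member_le_sum) auto
  also have "\<dots> = 0" using z w by (simp add: scalar_prod_def)
  finally have "w $ i * w $ i \<le> 0" .
  then have "w $ i * w $ i = 0" using zero_le_square[of "w $ i"] by linarith
  then show "w $ i = 0\<^sub>v a $ i" using i by simp
qed (use w in auto)

lemma pinv_inj:
  fixes M :: "real mat"
  assumes M: "M \<in> carrier_mat a b" and inj: "\<forall>v\<in>carrier_vec b. M *\<^sub>v v = 0\<^sub>v a \<longrightarrow> v = 0\<^sub>v b"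
  shows "pinv M \<in> carrier_mat b a" "pinv M * M = 1\<^sub>m b"
proof -
  define G where "G = transpose_mat M * M"
  have Mt: "transpose_mat M \<in> carrier_mat b a" using M by auto
  have G: "G \<in> carrier_mat b b" unfolding G_def using M by auto
  have Gsym: "transpose_mat G = G" unfolding G_def using M by (simp add: transpose_mult[OF Mt M])
  have "det G \<noteq> 0"
  proof
    assume "det G = 0"
    then obtain v where v: "v \<in> carrier_vec b" "v \<noteq> 0\<^sub>v b" "G *\<^sub>v v = 0\<^sub>v b"
      using det_0_iff_vec_prod_zero_field[OF G] by blast
    have "(M *\<^sub>v v) \<bullet> (M *\<^sub>v v) = v \<bullet> (G *\<^sub>v v)" unfolding G_def using gram_quad[OF M v(1)] by simp
    also have "\<dots> = 0" using v by simp
    finally have "M *\<^sub>v v = 0\<^sub>v a" using M v by (intro vec_sq_zero) auto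
    then show False using inj v by auto
  qed
  then have "G \<in> Units (ring_mat TYPE(real) b ())" by (rule det_non_zero_imp_unit[OF G])
  then obtain Gi where Gi: "Gi \<in> carrier_mat b b" and GGi: "G * Gi = 1\<^sub>m b" and GiG: "Gi * G = 1\<^sub>m b"
    unfolding Units_def ring_mat_def by auto
  have GiT: "transpose_mat Gi = Gi"
  proof -
    have GiTc: "transpose_mat Gi \<in> carrier_mat b b" using Gi by auto
    have "transpose_mat Gi * G = transpose_mat Gi * transpose_mat G" using Gsym by simp
    also have "\<dots> = transpose_mat (G * Gi)" using transpose_mult[OF G Gi] by simp
    also have "\<dots> = 1\<^sub>m b" using GGi by simp
    finally have e: "transpose_mat Gi * G = 1\<^sub>m b" .
    have "transpose_mat Gi = transpose_mat Gi * (G * Gi)" using GGi GiTc by simp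
    also have "\<dots> = (transpose_mat Gi * G) * Gi" using GiTc G Gi by simp
    also have "\<dots> = Gi" using e Gi by simp
    finally show ?thesis .
  qed
  define P where "P = Gi * transpose_mat M"
  have P: "P \<in> carrier_mat b a" unfolding P_def using Gi Mt by auto
  have PM: "P * M = 1\<^sub>m b"
  proof -
    have "P * M = Gi * (transpose_mat M * M)" unfolding P_def using Gi Mt M by simp
    then show ?thesis using GiG unfolding G_def by simp
  qed
  have MP: "M * P \<in> carrier_mat a a" using M P by auto
  have pen: "P \<in> carrier_mat (dim_col M) (dim_row M) \<and> M * P * M = M \<and> P * M * P = P \<and>
       transpose_mat (M * P) = M * P \<and> transpose_mat (P * M) = P * M"
  proof (intro conjI)
    show "P \<in> carrier_mat (dim_col M) (dim_row M)" using P M by auto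
    show "M * P * M = M" using M P PM by simp
    show "P * M * P = P" using M P PM by simp
    show "transpose_mat (P * M) = P * M" using PM by simp
    have "transpose_mat (M * P) = transpose_mat (M * (Gi * transpose_mat M))" unfolding P_def ..
    also have "\<dots> = transpose_mat (Gi * transpose_mat M) * transpose_mat M"
      by (rule transpose_mult[OF M]) (use Gi Mt in auto)
    also have "transpose_mat (Gi * transpose_mat M) = M * transpose_mat Gi"
      using transpose_mult[OF Gi Mt] by simp
    also have "M * transpose_mat Gi * transpose_mat M = M * P" unfolding GiT P_def using M Gi Mt by simp
    finally show "transpose_mat (M * P) = M * P" .
  qed
  have uniq: "X = P" if X: "X \<in> carrier_mat (dim_col M) (dim_row M) \<and> M * X * M = M \<and> X * M * X = X \<and>
       transpose_mat (M * X) = M * X \<and> transpose_mat (X * M) = X * M" for X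
  proof -
    have Xc: "X \<in> carrier_mat b a" using X M by auto
    have MX: "M * X \<in> carrier_mat a a" using M Xc by auto
    have "transpose_mat M = transpose_mat (M * X * M)" using X by simp
    also have "\<dots> = transpose_mat M * transpose_mat (M * X)" by (rule transpose_mult[OF MX M])
    also have "\<dots> = transpose_mat M * (M * X)" using X by simp
    also have "\<dots> = G * X" unfolding G_def using Mt M Xc by simp
    finally have e: "transpose_mat M = G * X" .
    have "X = (Gi * G) * X" using GiG Xc by simp
    also have "\<dots> = Gi * (G * X)" using Gi G Xc by simp
    also have "\<dots> = P" unfolding P_def e ..
    finally show ?thesis .
  qed
  have "pinv M = P" unfolding pinv_def by (rule the_equality, rule pen, rule uniq, assumption)
  then show "pinv M \<in> carrier_mat b a" "pinv M * M = 1\<^sub>m b" using P PM by auto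
qed

lemma normal_eq:
  fixes M B Xdd :: "real mat"
  assumes M: "M \<in> carrier_mat a b" and B: "B \<in> carrier_mat a l" and Xdd: "Xdd \<in> carrier_mat b l"
    and min: "\<forall>Y\<in>carrier_mat b l. fro2 (M * Xdd - B) \<le> fro2 (M * Y - B)"
  shows "transpose_mat M * (M * Xdd - B) = 0\<^sub>m b l"
proof -
  define R where "R = M * Xdd - B"
  define D where "D = transpose_mat M * R"
  have Rc: "R \<in> carrier_mat a l" unfolding R_def using M Xdd B by auto
  have Dc: "D \<in> carrier_mat b l" unfolding D_def using M Rc by auto
  have MD: "M * D \<in> carrier_mat a l" using M Dc by auto
  have "2 * t * (- fro2 D) + t^2 * (- fro2 (M * D)) \<le> 0" for t
  proof -
    have Yc: "Xdd + t \<cdot>\<^sub>m D \<in> carrier_mat b l" using Xdd Dc by auto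
    have "M * (Xdd + t \<cdot>\<^sub>m D) = M * Xdd + M * (t \<cdot>\<^sub>m D)"
      by (rule mult_add_distrib_mat[OF M Xdd]) (use Dc in auto)
    also have "M * (t \<cdot>\<^sub>m D) = t \<cdot>\<^sub>m (M * D)" by (rule mult_smult_distrib[OF M Dc])
    finally have e1: "M * (Xdd + t \<cdot>\<^sub>m D) = M * Xdd + t \<cdot>\<^sub>m (M * D)" .
    have e2: "M * (Xdd + t \<cdot>\<^sub>m D) - B = R + t \<cdot>\<^sub>m (M * D)"
      unfolding e1 R_def using M Xdd B MD by (intro eq_matI) auto
    have "fro2 R \<le> fro2 (R + t \<cdot>\<^sub>m (M * D))" using min Yc unfolding R_def[symmetric] e2[symmetric] by blast
    also have "\<dots> = fro2 R + 2 * t * minner R (M * D) + t^2 * fro2 (M * D)" by (rule fro2_lin[OF Rc MD])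
    also have "minner R (M * D) = fro2 D" using minner_adj[OF Rc M Dc] by (simp add: D_def)
    finally show ?thesis by simp
  qed
  then have "- fro2 D = 0" by (rule perturb_zero)
  then have "D = 0\<^sub>m b l" using fro2_zero[OF Dc] by simp
  then show ?thesis unfolding D_def R_def .
qed

lemma per_step:
  fixes A B X Xdd :: "real mat"
  assumes A: "A \<in> carrier_mat (m * p) n" and B: "B \<in> carrier_mat (m * p) l" and p: "p > 0" and n: "n > 0" and m: "m > 0"
    and T: "finite T" "T \<subseteq> Pow {..<n}"
    and Xdd: "Xdd \<in> carrier_mat (n * p) l" and X: "X \<in> carrier_mat (n * p) l"
    and normal: "transpose_mat (bcirc p A) * (bcirc p A * Xdd - B) = 0\<^sub>m (n * p) l"
    and s: "\<forall>\<tau>\<in>T. (sigma_max (bcirc p (lat_slices n p A \<tau>)))^2 \<le> s2"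
    and c0: "2 * \<omega> - \<omega>^2 * s2 \<ge> 0" and w: "\<omega> > 0"
  shows "(\<Sum>\<tau>\<in>T. fro2 (bcirc p A * trbags_step n p A B \<omega> X \<tau> - bcirc p A * Xdd))
     \<le> real (card T) * fro2 (bcirc p A * X - bcirc p A * Xdd)
        - (2 * \<omega> - \<omega>^2 * s2) * real (c_min n T) * (sigma_min (bcirc p A))^2 * fro2 (bcirc p A * X - bcirc p A * Xdd)"
proof -
  define M where "M = bcirc p A"
  define e where "e = M * X - M * Xdd"
  define c0 where "c0 = 2 * \<omega> - \<omega>^2 * s2"
  have Mc: "M \<in> carrier_mat (m * p) (n * p)" unfolding M_def by (rule M_carrier[OF A p])
  have ec: "e \<in> carrier_mat (m * p) l" unfolding e_def using Mc X Xdd by auto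
  define V where "V = transpose_mat M * e"
  have Vc: "V \<in> carrier_mat (n * p) l" unfolding V_def using Mc ec by auto
  define h where "h = (\<lambda>\<tau>. fro2 (transpose_mat (bcirc p (Etau n p \<tau>)) * V))"
  have bnd: "fro2 (M * trbags_step n p A B \<omega> X \<tau> - M * Xdd) \<le> fro2 e - c0 * h \<tau>" if tau: "\<tau> \<in> T" for \<tau>
  proof -
    have tau': "\<tau> \<subseteq> {..<n}" using tau T by auto
    define Q where "Q = bcirc p (Etau n p \<tau>)"
    have Qc: "Q \<in> carrier_mat (n * p) (card \<tau> * p)" unfolding Q_def by (rule Q_carrier[OF tau' p])
    have Nc: "M * Q \<in> carrier_mat (m * p) (card \<tau> * p)" using Mc Qc by auto
    have NL: "M * Q = bcirc p (lat_slices n p A \<tau>)" unfolding M_def Q_def lat_slices_def tprod_def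
      by (rule MQ[OF A tau' p])
    have sN: "(sigma_max (M * Q))^2 \<le> s2" unfolding NL using s tau by auto
    have "M * trbags_step n p A B \<omega> X \<tau> - M * Xdd = e - \<omega> \<cdot>\<^sub>m ((M * Q) * (transpose_mat (M * Q) * e))"
      unfolding step_eq[OF A tau' p] M_def[symmetric] Q_def[symmetric] e_def
      by (rule one_step_alg(1)[OF Mc Qc X Xdd B normal[folded M_def]])
    also have "fro2 \<dots> \<le> fro2 e - c0 * fro2 (transpose_mat (M * Q) * e)"
      unfolding c0_def by (rule one_step_norm[OF Nc ec sN w])
    also have "transpose_mat (M * Q) * e = transpose_mat Q * V"
      unfolding e_def V_def by (rule one_step_alg(2)[OF Mc Qc X Xdd B normal[folded M_def]])
    finally show ?thesis unfolding h_def Q_def .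
  qed
  have "(\<Sum>\<tau>\<in>T. fro2 (M * trbags_step n p A B \<omega> X \<tau> - M * Xdd)) \<le> (\<Sum>\<tau>\<in>T. fro2 e - c0 * h \<tau>)"
    by (rule sum_mono) (rule bnd)
  also have "\<dots> = real (card T) * fro2 e - c0 * (\<Sum>\<tau>\<in>T. h \<tau>)" by (simp add: sum_subtractf sum_distrib_left)
  finally have S1: "(\<Sum>\<tau>\<in>T. fro2 (M * trbags_step n p A B \<omega> X \<tau> - M * Xdd)) \<le> real (card T) * fro2 e - c0 * (\<Sum>\<tau>\<in>T. h \<tau>)" .
  have hs: "(\<Sum>\<tau>\<in>T. h \<tau>) = (\<Sum>\<tau>\<in>T. \<Sum>s\<in>{s \<in> {..<n * p}. s mod n \<in> \<tau>}. \<Sum>j<l. V $$ (s, j) * V $$ (s, j))"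
    unfolding h_def using T by (intro sum.cong refl QtV[OF _ p n Vc]) auto
  have fV: "fro2 V = (\<Sum>s<n * p. \<Sum>j<l. V $$ (s, j) * V $$ (s, j))" unfolding minner_def using Vc by simp
  have "(\<Sum>\<tau>\<in>T. h \<tau>) \<ge> real (c_min n T) * fro2 V"
    unfolding hs fV by (rule cmin_sum[OF T(1) n]) (auto intro!: sum_nonneg)
  moreover have "fro2 V \<ge> (sigma_min M)^2 * fro2 e"
  proof -
    have D: "X - Xdd \<in> carrier_mat (n * p) l" using X Xdd by auto
    have eD: "e = M * (X - Xdd)" unfolding e_def using Mc X Xdd by (simp add: mult_minus_distrib_mat)
    show ?thesis unfolding V_def eD using m n p by (intro sigma_min_bound[OF Mc _ _ D]) auto
  qed
  ultimately have "(\<Sum>\<tau>\<in>T. h \<tau>) \<ge> real (c_min n T) * ((sigma_min M)^2 * fro2 e)"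
    by (meson order_trans mult_left_mono of_nat_0_le_iff)
  then have "c0 * (\<Sum>\<tau>\<in>T. h \<tau>) \<ge> c0 * (real (c_min n T) * ((sigma_min M)^2 * fro2 e))"
    using c0 unfolding c0_def by (intro mult_left_mono) auto
  with S1 show ?thesis unfolding M_def[symmetric] e_def[symmetric] c0_def[symmetric] by (simp add: mult_ac)
qed

theorem theorem2:
  fixes m n l p :: nat and A B X0 Xdd :: "real mat" and T :: "nat set set" and \<omega> :: real
  assumes dims: "0 < m" "0 < n" "0 < l" "0 < p"
    and A: "A \<in> carrier_mat (m * p) n"
    and B: "B \<in> carrier_mat (m * p) l"
    and X0: "X0 \<in> carrier_mat (n * p) l"
    and T: "finite T" "T \<noteq> {}" "T \<subseteq> Pow {..<n}"
    and \<omega>: "\<omega> > 0"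
    and Xdd: "Xdd \<in> carrier_mat (n * p) l"
    and Xdd_min: "\<forall>Y \<in> carrier_mat (n * p) l.
                    (fro_norm (tprod p A Xdd - B))\<^sup>2 \<le> (fro_norm (tprod p A Y - B))\<^sup>2"
    and step: "2 * \<omega> - \<omega>\<^sup>2 * (MAX \<tau>\<in>T. (sigma_max (bcirc p (lat_slices n p A \<tau>)))\<^sup>2) > 0"
  defines "\<rho> \<equiv> 1 - (2 * \<omega> - \<omega>\<^sup>2 * (MAX \<tau>\<in>T. (sigma_max (bcirc p (lat_slices n p A \<tau>)))\<^sup>2)) * (real (c_min n T) / real (card T))
                 * (sigma_min (bcirc p A))\<^sup>2"
    and "\<kappa>sq \<equiv> (sigma_max (pinv (bcirc p A)))\<^sup>2 * (sigma_max (bcirc p A))\<^sup>2"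
  shows "(\<forall>k. expect_blocks T k
              (\<lambda>\<tau>s. (fro_norm (tprod p A (trbags_iter n p A B \<omega> X0 \<tau>s) - tprod p A Xdd))\<^sup>2)
            \<le> \<rho> ^ k * (fro_norm (tprod p A X0 - tprod p A Xdd))\<^sup>2) \<and>
         ((\<forall>X \<in> carrier_mat (n * p) l. tprod p A X = tprod p A Xdd \<longrightarrow> X = Xdd) \<longrightarrow>
         (\<forall>k. expect_blocks T k
              (\<lambda>\<tau>s. (fro_norm (trbags_iter n p A B \<omega> X0 \<tau>s - Xdd))\<^sup>2)
            \<le> \<kappa>sq * \<rho> ^ k * (fro_norm (X0 - Xdd))\<^sup>2))"
proof -
  note kdef = assms(16)
  define M where "M = bcirc p A"
  have Mc: "M \<in> carrier_mat (m * p) (n * p)" unfolding M_def by (rule M_carrier[OF A dims(4)])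
  define s2 where "s2 = (MAX \<tau>\<in>T. (sigma_max (bcirc p (lat_slices n p A \<tau>)))\<^sup>2)"
  have s: "\<forall>\<tau>\<in>T. (sigma_max (bcirc p (lat_slices n p A \<tau>)))^2 \<le> s2"
    unfolding s2_def using T(1) by (auto intro!: Max_ge)
  define c0 where "c0 = 2 * \<omega> - \<omega>\<^sup>2 * s2"
  have c0: "c0 > 0" using step unfolding c0_def s2_def .
  have rho: "\<rho> = 1 - c0 * (real (c_min n T) / real (card T)) * (sigma_min M)\<^sup>2"
    unfolding \<rho>_def c0_def s2_def M_def ..
  have cardT: "real (card T) > 0" using T by (simp add: card_gt_0_iff)
  have tp: "tprod p A Y = M * Y" for Y unfolding tprod_def M_def ..
  have normal: "transpose_mat M * (M * Xdd - B) = 0\<^sub>m (n * p) l"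
    by (rule normal_eq[OF Mc B Xdd]) (use Xdd_min in \<open>simp add: fro_norm_sq tp\<close>)
  define F where "F = (\<lambda>X. fro2 (M * X - M * Xdd))"
  have F0: "F X \<ge> 0" for X unfolding F_def by (rule fro2_nonneg)
  have stepc: "trbags_step n p A B \<omega> X \<tau> \<in> carrier_mat (n * p) l"
    if X: "X \<in> carrier_mat (n * p) l" and tau: "\<tau> \<in> T" for X \<tau>
  proof -
    have tau': "\<tau> \<subseteq> {..<n}" using tau T by auto
    have Qc: "bcirc p (Etau n p \<tau>) \<in> carrier_mat (n * p) (card \<tau> * p)" by (rule Q_carrier[OF tau' dims(4)])
    show ?thesis unfolding step_eq[OF A tau' dims(4)] M_def[symmetric] using X Qc Mc B by auto
  qed
  have iter_snoc: "trbags_iter n p A B \<omega> X0 (xs @ [x]) = trbags_step n p A B \<omega> (trbags_iter n p A B \<omega> X0 xs) x" for xs x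
    unfolding trbags_iter_def by simp
  have iterc: "set xs \<subseteq> T \<Longrightarrow> trbags_iter n p A B \<omega> X0 xs \<in> carrier_mat (n * p) l" for xs
  proof (induction xs rule: rev_induct)
    case Nil then show ?case using X0 unfolding trbags_iter_def by simp
  next
    case (snoc x xs) then show ?case unfolding iter_snoc by (intro stepc) auto
  qed
  have ps: "(\<Sum>\<tau>\<in>T. F (trbags_step n p A B \<omega> X \<tau>)) \<le> real (card T) * \<rho> * F X"
    if X: "X \<in> carrier_mat (n * p) l" for X
  proof -
    have "(\<Sum>\<tau>\<in>T. F (trbags_step n p A B \<omega> X \<tau>))
       \<le> real (card T) * F X - c0 * real (c_min n T) * (sigma_min M)^2 * F X"
      unfolding F_def M_def c0_def
      by (rule per_step[OF A B dims(4) dims(2) dims(1) T(1) T(3) Xdd X normal[unfolded M_def] s])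
         (use c0 dims \<omega> in \<open>auto simp: c0_def\<close>)
    also have "\<dots> = real (card T) * \<rho> * F X" unfolding rho using cardT by (simp add: field_simps)
    finally show ?thesis .
  qed
  define E where "E = (\<lambda>k. expect_blocks T k (\<lambda>\<tau>s. F (trbags_iter n p A B \<omega> X0 \<tau>s)))"
  have Enn: "E k \<ge> 0" for k unfolding E_def by (rule expect_nonneg) (rule F0)
  have Erec: "E (Suc k) \<le> \<rho> * E k" for k
  proof -
    let ?L = "{xs. set xs \<subseteq> T \<and> length xs = k}"
    have "E (Suc k) = (\<Sum>xs\<in>?L. \<Sum>x\<in>T. F (trbags_iter n p A B \<omega> X0 (xs @ [x]))) / real (card T) ^ Suc k"
      unfolding E_def by (rule expect_Suc[OF T(1)])
    also have "\<dots> \<le> (\<Sum>xs\<in>?L. real (card T) * \<rho> * F (trbags_iter n p A B \<omega> X0 xs)) / real (card T) ^ Suc k"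
      unfolding iter_snoc using cardT
      by (intro divide_right_mono sum_mono ps iterc) auto
    also have "\<dots> = \<rho> * E k" unfolding E_def expect_blocks_def using cardT
      by (simp add: sum_distrib_left[symmetric] field_simps)
    finally show ?thesis .
  qed
  have claim1: "E k \<le> \<rho> ^ k * F X0" for k
  proof (induction k)
    case 0 then show ?case unfolding E_def expect_0 trbags_iter_def by simp
  next
    case (Suc k)
    show ?case
    proof (cases "\<rho> \<ge> 0")
      case True
      have "E (Suc k) \<le> \<rho> * E k" by (rule Erec)
      also have "\<dots> \<le> \<rho> * (\<rho> ^ k * F X0)" using Suc.IH True by (rule mult_left_mono)
      finally show ?thesis by simp
    next
      case False
      have "0 \<le> (\<Sum>\<tau>\<in>T. F (trbags_step n p A B \<omega> X0 \<tau>))" by (intro sum_nonneg F0)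
      also have "\<dots> \<le> real (card T) * \<rho> * F X0" by (rule ps[OF X0])
      finally have "0 \<le> real (card T) * (\<rho> * F X0)" by (simp add: mult_ac)
      then have "0 \<le> \<rho> * F X0" using cardT by (simp add: zero_le_mult_iff)
      then have FX0: "F X0 = 0" using False F0[of X0] by (simp add: zero_le_mult_iff)
      have "E k = 0" using Suc.IH Enn[of k] FX0 by simp
      then show ?thesis using Erec[of k] FX0 by simp
    qed
  qed
  have E1: "expect_blocks T k (\<lambda>\<tau>s. (fro_norm (tprod p A (trbags_iter n p A B \<omega> X0 \<tau>s) - tprod p A Xdd))\<^sup>2) = E k" for k
    unfolding E_def F_def fro_norm_sq tp ..
  have F_X0: "F X0 = (fro_norm (tprod p A X0 - tprod p A Xdd))\<^sup>2" unfolding F_def fro_norm_sq tp ..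
  show ?thesis
  proof (intro conjI allI impI)
    fix k
    show "expect_blocks T k (\<lambda>\<tau>s. (fro_norm (tprod p A (trbags_iter n p A B \<omega> X0 \<tau>s) - tprod p A Xdd))\<^sup>2)
            \<le> \<rho> ^ k * (fro_norm (tprod p A X0 - tprod p A Xdd))\<^sup>2"
      unfolding E1 F_X0[symmetric] by (rule claim1)
  next
    fix k
    assume uniq: "\<forall>X \<in> carrier_mat (n * p) l. tprod p A X = tprod p A Xdd \<longrightarrow> X = Xdd"
    have uniqM: "X = Xdd" if "X \<in> carrier_mat (n * p) l" "M * X = M * Xdd" for X
      using uniq that unfolding tp by blast
    have eqM: "M * X = M * Xdd" if X: "X \<in> carrier_mat (n * p) l" and F: "F X = 0" for X
    proof -
      have d: "M * X - M * Xdd \<in> carrier_mat (m * p) l" using Mc X Xdd by auto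
      have "M * X - M * Xdd = 0\<^sub>m (m * p) l" using fro2_zero[OF d] F unfolding F_def by simp
      then have z: "M * X - M * Xdd = 0\<^sub>m (m * p) l" .
      show ?thesis
      proof (rule eq_matI)
        fix i j assume "i < dim_row (M * Xdd)" "j < dim_col (M * Xdd)"
        then have i: "i < m * p" and j: "j < l" using Mc Xdd by auto
        have "(M * X - M * Xdd) $$ (i, j) = 0" using z i j by simp
        moreover have "(M * X - M * Xdd) $$ (i, j) = (M * X) $$ (i, j) - (M * Xdd) $$ (i, j)"
          by (rule index_minus_mat) (use i j Mc X Xdd in auto)
        ultimately show "(M * X) $$ (i, j) = (M * Xdd) $$ (i, j)" by linarith
      qed (use Mc X Xdd in auto)
    qed
    have inj: "\<forall>v\<in>carrier_vec (n * p). M *\<^sub>v v = 0\<^sub>v (m * p) \<longrightarrow> v = 0\<^sub>v (n * p)"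
    proof (intro ballI impI)
      fix v :: "real vec" assume v: "v \<in> carrier_vec (n * p)" and Mv: "M *\<^sub>v v = 0\<^sub>v (m * p)"
      define V where "V = mat (n * p) l (\<lambda>(i, j). if j = 0 then v $ i else 0)"
      have Vc: "V \<in> carrier_mat (n * p) l" unfolding V_def by simp
      have MV: "M * V = 0\<^sub>m (m * p) l"
      proof (rule eq_matI)
        fix i j assume i: "i < dim_row (0\<^sub>m (m * p) l)" and j: "j < dim_col (0\<^sub>m (m * p) l)"
        then have i: "i < m * p" and j: "j < l" by auto
        have "(M * V) $$ (i, j) = (\<Sum>s<n * p. M $$ (i, s) * V $$ (s, j))" by (rule mult_entry[OF Mc Vc i j])
        also have "\<dots> = (if j = 0 then (\<Sum>s<n * p. M $$ (i, s) * v $ s) else 0)"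
          unfolding V_def using j by (auto intro!: sum.cong)
        also have "(\<Sum>s<n * p. M $$ (i, s) * v $ s) = (M *\<^sub>v v) $ i"
          using Mc v i by (simp add: scalar_prod_def lessThan_atLeast0)
        also have "\<dots> = 0" using Mv i by simp
        finally show "(M * V) $$ (i, j) = 0\<^sub>m (m * p) l $$ (i, j)" using i j by simp
      qed (use Mc Vc in auto)
      have X1: "Xdd + V \<in> carrier_mat (n * p) l" using Xdd Vc by auto
      have "M * (Xdd + V) = M * Xdd + M * V" by (rule mult_add_distrib_mat[OF Mc Xdd Vc])
      also have "\<dots> = M * Xdd" unfolding MV using Mc Xdd by simp
      finally have "Xdd + V = Xdd" by (rule uniqM[OF X1])
      then have XV: "Xdd + V = Xdd" .
      show "v = 0\<^sub>v (n * p)"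
      proof (rule eq_vecI)
        fix i assume "i < dim_vec (0\<^sub>v (n * p))"
        then have i: "i < n * p" by simp
        have "(Xdd + V) $$ (i, 0) = Xdd $$ (i, 0) + V $$ (i, 0)" using Xdd Vc i dims by simp
        then have "V $$ (i, 0) = 0" unfolding XV by simp
        then show "v $ i = 0\<^sub>v (n * p) $ i" unfolding V_def using i dims by simp
      qed (use v in auto)
    qed
    define P where "P = pinv M"
    have Pc: "P \<in> carrier_mat (n * p) (m * p)" and PM: "P * M = 1\<^sub>m (n * p)"
      unfolding P_def by (rule pinv_inj[OF Mc inj])+
    have rho0: "\<rho> \<ge> 0"
    proof (rule ccontr)
      assume neg: "\<not> \<rho> \<ge> 0"
      define J where "J = mat (n * p) l (\<lambda>_. 1 :: real)"
      have Jc: "J \<in> carrier_mat (n * p) l" unfolding J_def by simp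
      have X1: "Xdd + J \<in> carrier_mat (n * p) l" using Xdd Jc by auto
      have "0 \<le> (\<Sum>\<tau>\<in>T. F (trbags_step n p A B \<omega> (Xdd + J) \<tau>))" by (intro sum_nonneg F0)
      also have "\<dots> \<le> real (card T) * \<rho> * F (Xdd + J)" by (rule ps[OF X1])
      finally have "0 \<le> real (card T) * (\<rho> * F (Xdd + J))" by (simp add: mult_ac)
      then have "0 \<le> \<rho> * F (Xdd + J)" using cardT by (simp add: zero_le_mult_iff)
      then have "F (Xdd + J) = 0" using neg F0[of "Xdd + J"] by (simp add: zero_le_mult_iff)
      then have "Xdd + J = Xdd" using eqM[OF X1] uniqM[OF X1] by simp
      then have "(Xdd + J) $$ (0, 0) = Xdd $$ (0, 0)" by simp
      moreover have "(Xdd + J) $$ (0, 0) = Xdd $$ (0, 0) + 1" using Xdd Jc dims unfolding J_def by simp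
      ultimately show False by simp
    qed
    have sP0: "(sigma_max P)^2 \<ge> 0" by simp
    have pw: "(fro_norm (Y - Xdd))\<^sup>2 \<le> (sigma_max P)^2 * F Y" if Y: "Y \<in> carrier_mat (n * p) l" for Y
    proof -
      have D: "Y - Xdd \<in> carrier_mat (n * p) l" using Y Xdd by auto
      have MD: "M * (Y - Xdd) \<in> carrier_mat (m * p) l" using Mc D by auto
      have "Y - Xdd = (P * M) * (Y - Xdd)" unfolding PM by (rule left_mult_one_mat[OF D, symmetric])
      also have "\<dots> = P * (M * (Y - Xdd))" using Pc Mc D by simp
      finally have e: "Y - Xdd = P * (M * (Y - Xdd))" .
      have e2: "M * (Y - Xdd) = M * Y - M * Xdd" using Mc Y Xdd by (simp add: mult_minus_distrib_mat)
      have "(fro_norm (Y - Xdd))\<^sup>2 = fro2 (P * (M * (Y - Xdd)))" unfolding fro_norm_sq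
        by (rule arg_cong[where f="\<lambda>W. minner W W", OF e])
      also have "\<dots> \<le> (sigma_max P)^2 * fro2 (M * (Y - Xdd))" by (rule sigma_max_bound[OF Pc MD])
      finally show ?thesis unfolding F_def e2 .
    qed
    have "expect_blocks T k (\<lambda>\<tau>s. (fro_norm (trbags_iter n p A B \<omega> X0 \<tau>s - Xdd))\<^sup>2)
        \<le> expect_blocks T k (\<lambda>\<tau>s. (sigma_max P)^2 * F (trbags_iter n p A B \<omega> X0 \<tau>s))"
      by (rule expect_mono) (rule pw, rule iterc)
    also have "\<dots> = (sigma_max P)^2 * E k" unfolding E_def by (rule expect_scale)
    also have "\<dots> \<le> (sigma_max P)^2 * (\<rho> ^ k * F X0)" using claim1[of k] by (rule mult_left_mono) simp
    also have "F X0 \<le> (sigma_max M)^2 * (fro_norm (X0 - Xdd))\<^sup>2"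
    proof -
      have D: "X0 - Xdd \<in> carrier_mat (n * p) l" using X0 Xdd by auto
      have e2: "M * (X0 - Xdd) = M * X0 - M * Xdd" using Mc X0 Xdd by (simp add: mult_minus_distrib_mat)
      show ?thesis unfolding F_def fro_norm_sq e2[symmetric] by (rule sigma_max_bound[OF Mc D])
    qed
    then have "(sigma_max P)^2 * (\<rho> ^ k * F X0) \<le> (sigma_max P)^2 * (\<rho> ^ k * ((sigma_max M)^2 * (fro_norm (X0 - Xdd))\<^sup>2))"
      using rho0 by (intro mult_left_mono) auto
    also have "\<dots> = \<kappa>sq * \<rho> ^ k * (fro_norm (X0 - Xdd))\<^sup>2" unfolding kdef P_def M_def by (simp add: mult_ac)
    finally show "expect_blocks T k (\<lambda>\<tau>s. (fro_norm (trbags_iter n p A B \<omega> X0 \<tau>s - Xdd))\<^sup>2)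
            \<le> \<kappa>sq * \<rho> ^ k * (fro_norm (X0 - Xdd))\<^sup>2" .
  qed
qed

end
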